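(* Let $m=2$ (so $Y=W_2\times W_5$). Let $h=c_0+c_1T$ and $h'=c_0'+c_1'T$ with $c_0,c_1,c_0',c_1'\in\mathbb{R}$. Then $\mu_h=\varphi_h\circ\mu_0$ and $\mu_{h'}=\varphi_{h'}\circ\mu_0$ are equivalent real circle forms if and only if one of the following holds: (i) $c_0=c_0'=c_1=c_1'=0$; (ii) $c_0=c_0'=0$ and $c_1c_1'\neq0$; (iii) $c_1=c_1'=0$ and $c_0c_0'\neq0$; (iv) $c_0c_0'c_1c_1'\neq0$ and $(c_0'/c_0)^3=c_1'/c_1$. In particular there is an infinite family of pairwise inequivalent real circle forms on $Y$.
   Context: For $k\ge1$, $W_k=\mathbb{C}^2$ is the $\mathbb{C}^*$-module with weights $(k,-k)$: $t\cdot(x,y)=(t^kx,t^{-k}y)$. Here $n=5$ and $Y=W_2\times W_5$ with coordinates $(a,b,x,y)$, $t\cdot(a,b,x,y)=(t^2a,t^{-2}b,t^5x,t^{-5}y)$. Let $\sigma(t)=\overline{t}^{-1}$ on $\mathbb{C}^*$. A real circle form on $Y$ is an antiholomorphic involution $\mu$ of $Y$ with $\mu(t\cdot p)=\sigma(t)\cdot\mu(p)$; two such forms $\mu_1,\mu_2$ are equivalent if $\mu_2=\psi\circ\mu_1\circ\psi^{-1}$ for some regular $\mathbb{C}^*$-equivariant automorphism $\psi$ of $Y$. Let $\mu_0(a,b,x,y)=(\overline{b},\overline{a},\overline{y},\overline{x})$, $T=ab$, and for $h\in\mathbb{R}[T]$ let $M_h=\begin{pmatrix}1-Th^2 & a^nh^n\\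 -b^nh^n & \sum_{j=0}^{n-1}(Th^2)^j\end{pmatrix}$ (with $h=h(ab)$), $\varphi_h(a,b,x,y)=(a,b,M_h\binom{x}{y})$. *)

theory Defs
  imports Complex_Main
begin

text \<open>Points of Y = W_2 x W_5 = C^4 with coordinates (a,b,x,y).\<close>
type_synonym pt = "complex \<times> complex \<times> complex \<times> complex"

definition act :: "complex \<Rightarrow> pt \<Rightarrow> pt" where
  "act t p = (case p of (a,b,x,y) \<Rightarrow>
     (t^2 * a, inverse t ^ 2 * b, t^5 * x, inverse t ^ 5 * y))"

definition sigma :: "complex \<Rightarrow> complex" where
  "sigma t = inverse (cnj t)"

definition poly4 :: "(pt \<Rightarrow> complex) \<Rightarrow> bool" where
  "poly4 f \<longleftrightarrow> (\<exists>S :: (nat \<times> nat \<times> nat \<times> nat) set. \<exists>c. finite S \<and>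
     (\<forall>a b x y. f (a,b,x,y) =
        (\<Sum>(i,j,k,l)\<in>S. c (i,j,k,l) * a^i * b^j * x^k * y^l)))"

definition regular_map :: "(pt \<Rightarrow> pt) \<Rightarrow> bool" where
  "regular_map f \<longleftrightarrow> poly4 (\<lambda>p. fst (f p)) \<and> poly4 (\<lambda>p. fst (snd (f p)))
     \<and> poly4 (\<lambda>p. fst (snd (snd (f p)))) \<and> poly4 (\<lambda>p. snd (snd (snd (f p))))"

definition conj_pt :: "pt \<Rightarrow> pt" where
  "conj_pt p = (case p of (a,b,x,y) \<Rightarrow> (cnj a, cnj b, cnj x, cnj y))"

definition antiregular_map :: "(pt \<Rightarrow> pt) \<Rightarrow> bool" where
  "antiregular_map f \<longleftrightarrow> regular_map (conj_pt \<circ> f)"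

definition regular_aut :: "(pt \<Rightarrow> pt) \<Rightarrow> bool" where
  "regular_aut \<psi> \<longleftrightarrow> bij \<psi> \<and> regular_map \<psi> \<and> regular_map (inv \<psi>)"

definition equivariant :: "(pt \<Rightarrow> pt) \<Rightarrow> bool" where
  "equivariant \<psi> \<longleftrightarrow> (\<forall>t p. t \<noteq> 0 \<longrightarrow> \<psi> (act t p) = act t (\<psi> p))"

definition real_circle_form :: "(pt \<Rightarrow> pt) \<Rightarrow> bool" where
  "real_circle_form \<mu> \<longleftrightarrow> antiregular_map \<mu> \<and> \<mu> \<circ> \<mu> = id \<and>
     (\<forall>t p. t \<noteq> 0 \<longrightarrow> \<mu> (act t p) = act (sigma t) (\<mu> p))"

definition equivalent_rcf :: "(pt \<Rightarrow> pt) \<Rightarrow> (pt \<Rightarrow> pt) \<Rightarrow> bool" where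
  "equivalent_rcf \<mu>1 \<mu>2 \<longleftrightarrow> real_circle_form \<mu>1 \<and> real_circle_form \<mu>2 \<and>
     (\<exists>\<psi>. regular_aut \<psi> \<and> equivariant \<psi> \<and> \<mu>2 = \<psi> \<circ> \<mu>1 \<circ> inv \<psi>)"

definition mu0 :: "pt \<Rightarrow> pt" where
  "mu0 p = (case p of (a,b,x,y) \<Rightarrow> (cnj b, cnj a, cnj y, cnj x))"

text \<open>phi_h for n = 5 and h = c0 + c1 T (real coefficients), T = ab.\<close>
definition phi_lin :: "real \<Rightarrow> real \<Rightarrow> pt \<Rightarrow> pt" where
  "phi_lin c0 c1 p = (case p of (a,b,x,y) \<Rightarrow>
     (let T = a * b; h = complex_of_real c0 + complex_of_real c1 * T in
      (a, b, (1 - T * h^2) * x + a^5 * h^5 * y,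
             - (b^5 * h^5) * x + (\<Sum>j<5. (T * h^2)^j) * y)))"

definition mu_lin :: "real \<Rightarrow> real \<Rightarrow> pt \<Rightarrow> pt" where
  "mu_lin c0 c1 = phi_lin c0 c1 \<circ> mu0"

end

theory Submission
  imports Defs "HOL-Computational_Algebra.Fundamental_Theorem_Algebra"
begin

definition polyfun :: "(complex \<Rightarrow> complex) \<Rightarrow> bool" where
  "polyfun f \<longleftrightarrow> (\<exists>p. \<forall>z. f z = poly p z)"

lemma polyfun_const[simp]: "polyfun (\<lambda>z. c)"
  unfolding polyfun_def by (rule exI[of _ "[:c:]"]) simp

lemma polyfun_id[simp]: "polyfun (\<lambda>z. z)"
  unfolding polyfun_def by (rule exI[of _ "[:0,1:]"]) simp

lemma polyfun_add: "polyfun f \<Longrightarrow> polyfun g \<Longrightarrow> polyfun (\<lambda>z. f z + g z)"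
  unfolding polyfun_def by (metis poly_add)

lemma polyfun_mult: "polyfun f \<Longrightarrow> polyfun g \<Longrightarrow> polyfun (\<lambda>z. f z * g z)"
  unfolding polyfun_def by (metis poly_mult)

lemma polyfun_minus: "polyfun f \<Longrightarrow> polyfun (\<lambda>z. - f z)"
  unfolding polyfun_def by (metis poly_minus)

lemma polyfun_diff: "polyfun f \<Longrightarrow> polyfun g \<Longrightarrow> polyfun (\<lambda>z. f z - g z)"
  unfolding polyfun_def by (metis poly_diff)

lemma polyfun_power: "polyfun f \<Longrightarrow> polyfun (\<lambda>z. f z ^ n)"
  by (induction n) (auto simp: polyfun_mult)

lemma polyfun_sum: "(\<And>s. s \<in> S \<Longrightarrow> polyfun (f s)) \<Longrightarrow> polyfun (\<lambda>z. \<Sum>s\<in>S. f s z)"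
proof (induction S rule: infinite_finite_induct)
  case (insert x F) then show ?case by (simp add: polyfun_add)
qed auto

lemma polyfun_compose: "polyfun f \<Longrightarrow> polyfun g \<Longrightarrow> polyfun (\<lambda>z. f (g z))"
  unfolding polyfun_def by (metis poly_pcompose)

lemma polyfun_cont: "polyfun f \<Longrightarrow> isCont f z"
proof -
  assume "polyfun f"
  then obtain p where "f = poly p" unfolding polyfun_def by blast
  then show ?thesis by simp
qed

lemma polyfun_eq_reals:
  assumes "polyfun f" "polyfun g" "\<And>x::real. x \<noteq> 0 \<Longrightarrow> f (of_real x) = g (of_real x)"
  shows "f z = g z"
proof -
  obtain p q where p: "\<And>z. f z = poly p z" and q: "\<And>z. g z = poly q z"
    using assms unfolding polyfun_def by blast
  have "p - q = 0"
  proof (rule ccontr)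
    assume ne: "p - q \<noteq> 0"
    have "of_real ` {x::real. x \<noteq> 0} \<subseteq> {z. poly (p - q) z = 0}"
      using assms(3) by (auto simp: p q)
    moreover have "infinite (of_real ` {x::real. x \<noteq> 0} :: complex set)"
    proof
      assume "finite (of_real ` {x::real. x \<noteq> 0} :: complex set)"
      then have "finite {x::real. x \<noteq> 0}"
        using finite_imageD inj_on_def by (metis (mono_tags, lifting) of_real_eq_iff)
      moreover have "infinite {x::real. x \<noteq> 0}"
      proof -
        have "{x::real. x \<noteq> 0} = UNIV - {0}" by auto
        then show ?thesis by (simp add: infinite_UNIV_char_0)
      qed
      ultimately show False by simp
    qed
    ultimately show False using poly_roots_finite[OF ne] finite_subset by blast
  qed
  then show ?thesis by (simp add: p q)
qed

lemma polyfun_bounded_const: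
  assumes "polyfun f" "\<And>x::real. x \<le> -1 \<Longrightarrow> norm (f (of_real x)) \<le> M"
  shows "f z = f 0"
proof -
  obtain p where p: "\<And>z. f z = poly p z" using assms unfolding polyfun_def by blast
  show ?thesis
  proof (cases p)
    case (pCons a q)
    show ?thesis
    proof (cases "q = 0")
      case True then show ?thesis using pCons by (simp add: p)
    next
      case False
      from poly_infinity[OF False, of "M+1" a] obtain r where
        r: "\<And>z. r \<le> norm z \<Longrightarrow> M + 1 \<le> norm (poly (pCons a q) z)" by blast
      define x where "x = - max r 1"
      have "x \<le> -1" by (simp add: x_def)
      have "r \<le> norm (of_real x :: complex)" by (simp add: x_def)
      then have "M + 1 \<le> norm (f (of_real x))" using r pCons p by simp
      with assms(2)[OF \<open>x \<le> -1\<close>] show ?thesis by simp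
    qed
  qed
qed

lemma poly4_const: "poly4 (\<lambda>p. c)"
  unfolding poly4_def
  by (rule exI[of _ "{(0,0,0,0)}"], rule exI[of _ "\<lambda>_. c"]) simp

lemma poly4_a: "poly4 (\<lambda>p. fst p)"
  unfolding poly4_def by (rule exI[of _ "{(1,0,0,0)}"], rule exI[of _ "\<lambda>_. 1"]) simp
lemma poly4_b: "poly4 (\<lambda>p. fst (snd p))"
  unfolding poly4_def by (rule exI[of _ "{(0,1,0,0)}"], rule exI[of _ "\<lambda>_. 1"]) simp
lemma poly4_x: "poly4 (\<lambda>p. fst (snd (snd p)))"
  unfolding poly4_def by (rule exI[of _ "{(0,0,1,0)}"], rule exI[of _ "\<lambda>_. 1"]) simp
lemma poly4_y: "poly4 (\<lambda>p. snd (snd (snd p)))"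
  unfolding poly4_def by (rule exI[of _ "{(0,0,0,1)}"], rule exI[of _ "\<lambda>_. 1"]) simp

definition mon :: "nat \<times> nat \<times> nat \<times> nat \<Rightarrow> pt \<Rightarrow> complex" where
  "mon s p = (case s of (i,j,k,l) \<Rightarrow> case p of (a,b,x,y) \<Rightarrow> a^i * b^j * x^k * y^l)"

lemma poly4_alt: "poly4 f \<longleftrightarrow> (\<exists>S c. finite S \<and> (\<forall>p. f p = (\<Sum>s\<in>S. c s * mon s p)))"
proof -
  have eq: "(\<Sum>(i,j,k,l)\<in>S. c (i,j,k,l) * a^i * b^j * x^k * y^l) = (\<Sum>s\<in>S. c s * mon s (a,b,x,y))"
    for S c a b x y
    by (rule sum.cong) (auto simp: mon_def mult.assoc)
  have "(\<forall>a b x y. f (a,b,x,y) = (\<Sum>s\<in>S. c s * mon s (a,b,x,y))) \<longleftrightarrow> (\<forall>p. f p = (\<Sum>s\<in>S. c s * mon s p))"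
    for S c by auto
  then show ?thesis unfolding poly4_def eq by simp
qed

lemma mon_add: "mon (i1+i2, j1+j2, k1+k2, l1+l2) p = mon (i1,j1,k1,l1) p * mon (i2,j2,k2,l2) p"
  by (cases p) (simp add: mon_def power_add)

lemma poly4_add:
  assumes "poly4 f" "poly4 g" shows "poly4 (\<lambda>p. f p + g p)"
proof -
  obtain S c where S: "finite S" "\<And>p. f p = (\<Sum>s\<in>S. c s * mon s p)" using assms(1) poly4_alt by metis
  obtain T d where T: "finite T" "\<And>p. g p = (\<Sum>s\<in>T. d s * mon s p)" using assms(2) poly4_alt by metis
  define e where "e s = (if s \<in> S then c s else 0) + (if s \<in> T then d s else 0)" for s
  have "f p + g p = (\<Sum>s\<in>S \<union> T. e s * mon s p)" for p
  proof -
    have "(\<Sum>s\<in>S \<union> T. e s * mon s p) = (\<Sum>s\<in>S \<union> T. (if s \<in> S then c s * mon s p else 0))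
           + (\<Sum>s\<in>S \<union> T. (if s \<in> T then d s * mon s p else 0))"
      unfolding e_def by (simp add: sum.distrib distrib_right if_distrib[of "\<lambda>x. x * _"] cong: if_cong)
    also have "\<dots> = f p + g p"
      using S T by (simp add: sum.If_cases Int_absorb1 Int_absorb2)
    finally show ?thesis by simp
  qed
  then show ?thesis unfolding poly4_alt using S T by blast
qed

lemma poly4_mult:
  assumes "poly4 f" "poly4 g" shows "poly4 (\<lambda>p. f p * g p)"
proof -
  obtain S c where S: "finite S" "\<And>p. f p = (\<Sum>s\<in>S. c s * mon s p)" using assms(1) poly4_alt by metis
  obtain T d where T: "finite T" "\<And>p. g p = (\<Sum>s\<in>T. d s * mon s p)" using assms(2) poly4_alt by metis
  define pl where "pl = (\<lambda>(s::nat\<times>nat\<times>nat\<times>nat, t::nat\<times>nat\<times>nat\<times>nat).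
     case s of (i1,j1,k1,l1) \<Rightarrow> case t of (i2,j2,k2,l2) \<Rightarrow> (i1+i2, j1+j2, k1+k2, l1+l2))"
  have mpl: "mon (pl st) p = mon (fst st) p * mon (snd st) p" for st p
    by (cases st) (auto simp: pl_def mon_add split: prod.splits)
  define U where "U = pl ` (S \<times> T)"
  define e where "e u = (\<Sum>st\<in>{st \<in> S \<times> T. pl st = u}. c (fst st) * d (snd st))" for u
  have fU: "finite U" using S T by (simp add: U_def)
  have "f p * g p = (\<Sum>u\<in>U. e u * mon u p)" for p
  proof -
    have "f p * g p = (\<Sum>s\<in>S. \<Sum>t\<in>T. (c s * mon s p) * (d t * mon t p))"
      by (simp add: S T sum_product)
    also have "\<dots> = (\<Sum>st\<in>S \<times> T. (c (fst st) * mon (fst st) p) * (d (snd st) * mon (snd st) p))"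
      by (subst sum.cartesian_product) (simp add: case_prod_beta)
    also have "\<dots> = (\<Sum>st\<in>S \<times> T. c (fst st) * d (snd st) * mon (pl st) p)"
      by (rule sum.cong) (simp_all add: mpl)
    finally have "f p * g p = (\<Sum>st\<in>S \<times> T. c (fst st) * d (snd st) * mon (pl st) p)" .
    also have "\<dots> = (\<Sum>u\<in>U. \<Sum>st\<in>{st \<in> S \<times> T. pl st = u}. c (fst st) * d (snd st) * mon (pl st) p)"
      using S T by (subst sum.group[symmetric, of "S \<times> T" U pl]) (auto simp: U_def)
    also have "\<dots> = (\<Sum>u\<in>U. e u * mon u p)"
      unfolding e_def by (rule sum.cong) (auto simp: sum_distrib_right intro!: sum.cong)
    finally show ?thesis .
  qed
  then show ?thesis unfolding poly4_alt using fU by blast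
qed

lemma poly4_minus: "poly4 f \<Longrightarrow> poly4 (\<lambda>p. - f p)"
proof -
  assume "poly4 f"
  from poly4_mult[OF poly4_const[of "-1"] this] show ?thesis by simp
qed

lemma poly4_diff: "poly4 f \<Longrightarrow> poly4 g \<Longrightarrow> poly4 (\<lambda>p. f p - g p)"
proof -
  assume "poly4 f" "poly4 g"
  from poly4_add[OF this(1) poly4_minus[OF this(2)]] show ?thesis by simp
qed

lemma poly4_power: "poly4 f \<Longrightarrow> poly4 (\<lambda>p. f p ^ n)"
proof (induction n)
  case 0 then show ?case using poly4_const[of 1] by simp
next
  case (Suc n) then show ?case using poly4_mult[OF Suc(2) Suc(1)[OF Suc(2)]] by simp
qed

lemma poly4_sum: "(\<And>s. s \<in> S \<Longrightarrow> poly4 (f s)) \<Longrightarrow> poly4 (\<lambda>z. \<Sum>s\<in>S. f s z)"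
proof (induction S rule: infinite_finite_induct)
  case (infinite A) then show ?case using poly4_const[of 0] by simp
next
  case empty then show ?case using poly4_const[of 0] by simp
next
  case (insert x F)
  have "poly4 (\<lambda>z. f x z + (\<Sum>s\<in>F. f s z))"
    by (rule poly4_add) (use insert in auto)
  then show ?case using insert by simp
qed

lemma poly4_curve:
  assumes "poly4 F" "polyfun A" "polyfun B" "polyfun X" "polyfun Y"
  shows "polyfun (\<lambda>z. F (A z, B z, X z, Y z))"
proof -
  obtain S c where S: "finite S" "\<And>p. F p = (\<Sum>s\<in>S. c s * mon s p)" using assms(1) poly4_alt by metis
  have "polyfun (\<lambda>z. \<Sum>s\<in>S. c s * mon s (A z, B z, X z, Y z))"
    using assms(2-5) by (intro polyfun_sum) (auto simp: mon_def split: prod.splits intro!: polyfun_mult polyfun_power)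
  then show ?thesis by (simp add: S)
qed


definition dX :: "(pt \<Rightarrow> complex) \<Rightarrow> complex \<Rightarrow> complex \<Rightarrow> complex" where
  "dX F a b = Lim (at (0::real)) (\<lambda>e. F (a, b, of_real e, 0) / of_real e)"
definition dY :: "(pt \<Rightarrow> complex) \<Rightarrow> complex \<Rightarrow> complex \<Rightarrow> complex" where
  "dY F a b = Lim (at (0::real)) (\<lambda>e. F (a, b, 0, of_real e) / of_real e)"

definition ki :: "nat \<times> nat \<times> nat \<times> nat \<Rightarrow> nat" where "ki s = fst (snd (snd s))"
definition li :: "nat \<times> nat \<times> nat \<times> nat \<Rightarrow> nat" where "li s = snd (snd (snd s))"

lemma mon_split: "mon s (a,b,x,y) = mon s (a,b,1,1) * x^(ki s) * y^(li s)"
  by (cases s) (simp add: mon_def ki_def li_def)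

lemma tendsto_zero_of_div:
  assumes "((\<lambda>e. X e / of_real e) \<longlongrightarrow> (x1::complex)) (at (0::real))"
  shows "(X \<longlongrightarrow> 0) (at (0::real))"
proof -
  have "((\<lambda>e. (X e / of_real e) * of_real e) \<longlongrightarrow> x1 * of_real 0) (at (0::real))"
    by (intro tendsto_intros assms)
  moreover have "\<forall>\<^sub>F e in at (0::real). (X e / of_real e) * of_real e = X e"
    by (auto simp: eventually_at_filter)
  ultimately show ?thesis by (simp add: tendsto_cong)
qed

lemma mono_lim:
  assumes X: "((\<lambda>e. X e / of_real e) \<longlongrightarrow> (x1::complex)) (at (0::real))"
    and Y: "((\<lambda>e. Y e / of_real e) \<longlongrightarrow> (y1::complex)) (at (0::real))"
    and kl: "k \<noteq> 0 \<or> l \<noteq> 0"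
  shows "((\<lambda>e. X e ^ k * Y e ^ l / of_real e) \<longlongrightarrow>
           (if k = 1 \<and> l = 0 then x1 else if k = 0 \<and> l = 1 then y1 else 0)) (at (0::real))"
proof (cases "k \<noteq> 0")
  case True
  have X0: "(X \<longlongrightarrow> 0) (at (0::real))" by (rule tendsto_zero_of_div[OF X])
  have Y0: "(Y \<longlongrightarrow> 0) (at (0::real))" by (rule tendsto_zero_of_div[OF Y])
  have "((\<lambda>e. (X e / of_real e) * (X e ^ (k - 1) * Y e ^ l)) \<longlongrightarrow> x1 * (0 ^ (k - 1) * 0 ^ l)) (at (0::real))"
    by (intro tendsto_intros X X0 Y0)
  moreover have "(\<lambda>e. (X e / of_real e) * (X e ^ (k - 1) * Y e ^ l)) = (\<lambda>e. X e ^ k * Y e ^ l / of_real e)"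
    using True by (auto simp: power_eq_if)
  ultimately show ?thesis using True by (auto simp: power_0_left)
next
  case False
  then have l: "l \<noteq> 0" "k = 0" using kl by auto
  have Y0: "(Y \<longlongrightarrow> 0) (at (0::real))" by (rule tendsto_zero_of_div[OF Y])
  have "((\<lambda>e. (Y e / of_real e) * Y e ^ (l - 1)) \<longlongrightarrow> y1 * 0 ^ (l - 1)) (at (0::real))"
    by (intro tendsto_intros Y Y0)
  moreover have "(\<lambda>e. (Y e / of_real e) * Y e ^ (l - 1)) = (\<lambda>e. X e ^ k * Y e ^ l / of_real e)"
    using l by (auto simp: power_eq_if)
  ultimately show ?thesis using l by (auto simp: power_0_left)
qed

lemma lin_curve_gen:
  assumes S: "finite S" "\<And>p. F p = (\<Sum>s\<in>S. c s * mon s p)"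
    and F0: "\<And>a b. F (a,b,0,0) = 0"
    and A: "(A \<longlongrightarrow> a0) (at (0::real))" and B: "(B \<longlongrightarrow> b0) (at (0::real))"
    and X: "((\<lambda>e. X e / of_real e) \<longlongrightarrow> x1) (at (0::real))"
    and Y: "((\<lambda>e. Y e / of_real e) \<longlongrightarrow> y1) (at (0::real))"
  shows "((\<lambda>e. F (A e, B e, X e, Y e) / of_real e) \<longlongrightarrow>
      (\<Sum>s\<in>S. if ki s = 1 \<and> li s = 0 then c s * mon s (a0,b0,1,1) else 0) * x1 +
      (\<Sum>s\<in>S. if ki s = 0 \<and> li s = 1 then c s * mon s (a0,b0,1,1) else 0) * y1) (at (0::real))"
proof -
  define L where "L s = (if ki s = 1 \<and> li s = 0 then x1 else if ki s = 0 \<and> li s = 1 then y1 else 0)" for s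
  have split: "F (a,b,x,y) = (\<Sum>s\<in>S. if ki s = 0 \<and> li s = 0 then 0 else c s * mon s (a,b,x,y))" for a b x y
  proof -
    have "F (a,b,x,y) = (\<Sum>s\<in>S. (if ki s = 0 \<and> li s = 0 then c s * mon s (a,b,0,0) else 0)
        + (if ki s = 0 \<and> li s = 0 then 0 else c s * mon s (a,b,x,y)))"
      unfolding S(2) by (rule sum.cong) (auto simp: mon_split[of _ a b x y] mon_split[of _ a b 0 0])
    also have "\<dots> = F (a,b,0,0) + (\<Sum>s\<in>S. if ki s = 0 \<and> li s = 0 then 0 else c s * mon s (a,b,x,y))"
      unfolding sum.distrib S(2)
      by (simp, rule sum.cong) (auto simp: mon_split[of _ a b 0 0] power_0_left)
    finally show ?thesis using F0 by simp
  qed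
  have eq: "F (A e, B e, X e, Y e) / of_real e =
     (\<Sum>s\<in>S. if ki s = 0 \<and> li s = 0 then 0 else c s * mon s (A e, B e, 1, 1) * (X e ^ ki s * Y e ^ li s / of_real e))" for e
    unfolding split sum_divide_distrib
    by (rule sum.cong) (auto simp: mon_split[of _ "A e" "B e" "X e" "Y e"])
  have mon_cont: "((\<lambda>e. mon s (A e, B e, 1, 1)) \<longlongrightarrow> mon s (a0,b0,1,1)) (at (0::real))" for s
    by (cases s) (auto simp: mon_def intro!: tendsto_intros A B)
  have "((\<lambda>e. \<Sum>s\<in>S. if ki s = 0 \<and> li s = 0 then 0 else c s * mon s (A e, B e, 1, 1) * (X e ^ ki s * Y e ^ li s / of_real e))
     \<longlongrightarrow> (\<Sum>s\<in>S. if ki s = 0 \<and> li s = 0 then 0 else c s * mon s (a0,b0,1,1) * L s)) (at (0::real))"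
  proof (rule tendsto_sum)
    fix s assume "s \<in> S"
    show "((\<lambda>e. if ki s = 0 \<and> li s = 0 then 0 else c s * mon s (A e, B e, 1, 1) * (X e ^ ki s * Y e ^ li s / of_real e))
      \<longlongrightarrow> (if ki s = 0 \<and> li s = 0 then 0 else c s * mon s (a0,b0,1,1) * L s)) (at (0::real))"
    proof (cases "ki s = 0 \<and> li s = 0")
      case False
      then have "ki s \<noteq> 0 \<or> li s \<noteq> 0" by auto
      from mono_lim[OF X Y this] have "((\<lambda>e. X e ^ ki s * Y e ^ li s / of_real e) \<longlongrightarrow> L s) (at (0::real))"
        by (simp add: L_def)
      then have "((\<lambda>e. c s * mon s (A e, B e, 1, 1) * (X e ^ ki s * Y e ^ li s / of_real e)) \<longlongrightarrow> c s * mon s (a0,b0,1,1) * L s) (at (0::real))"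
        by (intro tendsto_mult tendsto_const mon_cont)
      then show ?thesis by (simp only: if_not_P[OF False])
    qed simp
  qed
  moreover have "(\<Sum>s\<in>S. if ki s = 0 \<and> li s = 0 then 0 else c s * mon s (a0,b0,1,1) * L s) =
      (\<Sum>s\<in>S. if ki s = 1 \<and> li s = 0 then c s * mon s (a0,b0,1,1) else 0) * x1 +
      (\<Sum>s\<in>S. if ki s = 0 \<and> li s = 1 then c s * mon s (a0,b0,1,1) else 0) * y1"
    unfolding sum_distrib_right sum.distrib[symmetric]
    by (rule sum.cong) (auto simp: L_def)
  ultimately show ?thesis unfolding eq by simp
qed

lemma lin_curve:
  assumes "poly4 F" "\<And>a b. F (a,b,0,0) = 0"
    and A: "(A \<longlongrightarrow> a0) (at (0::real))" and B: "(B \<longlongrightarrow> b0) (at (0::real))"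
    and X: "((\<lambda>e. X e / of_real e) \<longlongrightarrow> x1) (at (0::real))"
    and Y: "((\<lambda>e. Y e / of_real e) \<longlongrightarrow> y1) (at (0::real))"
  shows "((\<lambda>e. F (A e, B e, X e, Y e) / of_real e) \<longlongrightarrow> dX F a0 b0 * x1 + dY F a0 b0 * y1) (at (0::real))"
proof -
  obtain S c where S: "finite S" "\<And>p. F p = (\<Sum>s\<in>S. c s * mon s p)" using assms(1) poly4_alt by metis
  define Pc where "Pc a b = (\<Sum>s\<in>S. if ki s = 1 \<and> li s = 0 then c s * mon s (a,b,1,1) else 0)" for a b
  define Qc where "Qc a b = (\<Sum>s\<in>S. if ki s = 0 \<and> li s = 1 then c s * mon s (a,b,1,1) else 0)" for a b
  have one: "((\<lambda>e::real. of_real e / of_real e :: complex) \<longlongrightarrow> 1) (at 0)"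
  proof -
    have ev: "\<forall>\<^sub>F e in at (0::real). (of_real e / of_real e :: complex) = 1" by (auto simp: eventually_at_filter)
    show ?thesis by (subst tendsto_cong[OF ev]) simp
  qed
  have zero: "((\<lambda>e::real. 0 / of_real e :: complex) \<longlongrightarrow> 0) (at 0)" by simp
  have "dX F a b = Pc a b" for a b
  proof -
    from lin_curve_gen[OF S assms(2) tendsto_const tendsto_const one zero, of a b]
    have "((\<lambda>e. F (a, b, of_real e, 0) / of_real e) \<longlongrightarrow> Pc a b) (at (0::real))"
      by (simp add: Pc_def)
    then show ?thesis unfolding dX_def by (rule tendsto_Lim[rotated]) simp
  qed
  moreover have "dY F a b = Qc a b" for a b
  proof -
    from lin_curve_gen[OF S assms(2) tendsto_const tendsto_const zero one, of a b]
    have "((\<lambda>e. F (a, b, 0, of_real e) / of_real e) \<longlongrightarrow> Qc a b) (at (0::real))"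
      by (simp add: Qc_def)
    then show ?thesis unfolding dY_def by (rule tendsto_Lim[rotated]) simp
  qed
  ultimately show ?thesis using lin_curve_gen[OF S assms(2) A B X Y] by (simp add: Pc_def Qc_def)
qed


definition cA :: "(pt \<Rightarrow> pt) \<Rightarrow> pt \<Rightarrow> complex" where "cA f p = fst (f p)"
definition cB :: "(pt \<Rightarrow> pt) \<Rightarrow> pt \<Rightarrow> complex" where "cB f p = fst (snd (f p))"
definition cX :: "(pt \<Rightarrow> pt) \<Rightarrow> pt \<Rightarrow> complex" where "cX f p = fst (snd (snd (f p)))"
definition cY :: "(pt \<Rightarrow> pt) \<Rightarrow> pt \<Rightarrow> complex" where "cY f p = snd (snd (snd (f p)))"

lemma pt_eq_comp: "f p = (cA f p, cB f p, cX f p, cY f p)"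
  by (simp add: cA_def cB_def cX_def cY_def)

lemma regular_map_comps:
  assumes "regular_map f"
  shows "poly4 (cA f)" "poly4 (cB f)" "poly4 (cX f)" "poly4 (cY f)"
  using assms unfolding regular_map_def cA_def cB_def cX_def cY_def by (auto simp: comp_def)

lemma act_simp: "act t (a,b,x,y) = (t^2 * a, inverse t ^ 2 * b, t^5 * x, inverse t ^ 5 * y)"
  by (simp add: act_def)

lemma equivariant_comps:
  assumes "equivariant f" "t \<noteq> 0"
  shows "cA f (act t p) = t^2 * cA f p" "cB f (act t p) = inverse t ^ 2 * cB f p"
        "cX f (act t p) = t^5 * cX f p" "cY f (act t p) = inverse t ^ 5 * cY f p"
proof -
  have "f (act t p) = act t (f p)" using assms unfolding equivariant_def by blast
  then show "cA f (act t p) = t^2 * cA f p" "cB f (act t p) = inverse t ^ 2 * cB f p"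
        "cX f (act t p) = t^5 * cX f p" "cY f (act t p) = inverse t ^ 5 * cY f p"
    by (simp_all add: cA_def cB_def cX_def cY_def act_def split: prod.splits)
qed

lemma poly4_polyfun_line:
  assumes "poly4 F" "polyfun A" "polyfun B"
  shows "polyfun (\<lambda>z. F (A z, B z, 0, 0))"
  using poly4_curve[OF assms polyfun_const polyfun_const] .

lemma XY_zero_on_Z:
  assumes "equivariant f"
  shows "cX f (a,b,0,0) = 0" "cY f (a,b,0,0) = 0"
proof -
  have e: "act (-1) (a,b,0,0) = (a,b,0,0)" by (simp add: act_def)
  from equivariant_comps(3)[OF assms, of "-1" "(a,b,0,0)"] e
  show "cX f (a,b,0,0) = 0" by simp
  from equivariant_comps(4)[OF assms, of "-1" "(a,b,0,0)"] e
  show "cY f (a,b,0,0) = 0" by simp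
qed

lemma A_on_Z:
  assumes "equivariant f" "regular_map f"
  shows "cA f (a,b,0,0) = a * cA f (1, a*b, 0, 0)"
proof -
  have eq: "cA f (of_real x, b, 0, 0) = of_real x * cA f (1, of_real x * b, 0, 0)" if "x \<noteq> 0" for x :: real
  proof -
    define t where "t = csqrt (of_real x)"
    have t2: "t^2 = of_real x" by (simp add: t_def)
    then have t0: "t \<noteq> 0" using that by auto
    have "act t (1, of_real x * b, 0, 0) = (of_real x, b, 0, 0)"
      using t2 t0 that by (simp add: act_def power2_eq_square field_simps)
    with equivariant_comps(1)[OF assms(1) t0, of "(1, of_real x * b, 0, 0)"] t2
    show ?thesis by simp
  qed
  have P: "poly4 (cA f)" using regular_map_comps[OF assms(2)] by simp
  show ?thesis
    by (rule polyfun_eq_reals[of "\<lambda>a. cA f (a,b,0,0)" "\<lambda>a. a * cA f (1, a*b, 0, 0)"])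
       (auto intro!: poly4_polyfun_line[OF P] polyfun_mult polyfun_id polyfun_const eq)
qed

lemma B_on_Z:
  assumes "equivariant f" "regular_map f"
  shows "cB f (a,b,0,0) = b * cB f (a*b, 1, 0, 0)"
proof -
  have eq: "cB f (a, of_real x, 0, 0) = of_real x * cB f (a * of_real x, 1, 0, 0)" if "x \<noteq> 0" for x :: real
  proof -
    define t where "t = inverse (csqrt (of_real x))"
    have t2: "inverse t ^ 2 = of_real x" by (simp add: t_def)
    then have t0: "t \<noteq> 0" using that by auto
    have "t^2 = inverse (of_real x)" using t2 by (metis inverse_inverse_eq power_inverse)
    then have "act t (a * of_real x, 1, 0, 0) = (a, of_real x, 0, 0)"
      using t2 t0 that by (simp add: act_def field_simps)
    with equivariant_comps(2)[OF assms(1) t0, of "(a * of_real x, 1, 0, 0)"] t2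
    show ?thesis by simp
  qed
  have P: "poly4 (cB f)" using regular_map_comps[OF assms(2)] by simp
  show ?thesis
    by (rule polyfun_eq_reals[of "\<lambda>b. cB f (a,b,0,0)" "\<lambda>b. b * cB f (a*b, 1, 0, 0)"])
       (auto intro!: poly4_polyfun_line[OF P] polyfun_mult polyfun_id polyfun_const eq)
qed

lemma lin_weight:
  assumes P: "poly4 F" and F0: "\<And>a b. F (a,b,0,0) = 0" and t0: "t \<noteq> 0"
    and W: "\<And>p. F (act t p) = w * F p"
  shows "dX F (t^2 * a) (inverse t ^ 2 * b) * t^5 = w * dX F a b"
    and "dY F (t^2 * a) (inverse t ^ 2 * b) * inverse t ^ 5 = w * dY F a b"
proof -
  have one: "((\<lambda>e::real. of_real e / of_real e :: complex) \<longlongrightarrow> 1) (at 0)"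
  proof -
    have ev: "\<forall>\<^sub>F e in at (0::real). (of_real e / of_real e :: complex) = 1" by (auto simp: eventually_at_filter)
    show ?thesis by (subst tendsto_cong[OF ev]) simp
  qed
  have zero: "((\<lambda>e::real. 0 / of_real e :: complex) \<longlongrightarrow> 0) (at 0)" by simp
  have c1: "((\<lambda>e::real. c * of_real e / of_real e :: complex) \<longlongrightarrow> c) (at 0)" for c
  proof -
    have ev: "\<forall>\<^sub>F e in at (0::real). (c * of_real e / of_real e :: complex) = c" by (auto simp: eventually_at_filter)
    show ?thesis by (subst tendsto_cong[OF ev]) simp
  qed
  have c0: "((\<lambda>e::real. c * 0 / of_real e :: complex) \<longlongrightarrow> 0) (at 0)" for c by simp
  have L1: "((\<lambda>e. F (a, b, of_real e, 0) / of_real e) \<longlongrightarrow> dX F a b * 1 + dY F a b * 0) (at (0::real))"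
    by (rule lin_curve[OF P F0 tendsto_const tendsto_const one zero])
  have L2: "((\<lambda>e. F (t^2 * a, inverse t ^ 2 * b, t^5 * of_real e, inverse t ^ 5 * 0) / of_real e) \<longlongrightarrow>
      dX F (t^2 * a) (inverse t ^ 2 * b) * t^5 + dY F (t^2 * a) (inverse t ^ 2 * b) * 0) (at (0::real))"
    by (rule lin_curve[OF P F0 tendsto_const tendsto_const c1 c0])
  have "(\<lambda>e. F (t^2 * a, inverse t ^ 2 * b, t^5 * of_real e, inverse t ^ 5 * 0) / of_real e)
      = (\<lambda>e. w * (F (a, b, of_real e, 0) / of_real e))"
    using W[of "(a,b,of_real _,0)"] by (simp add: act_def)
  with L2 have L2': "((\<lambda>e. w * (F (a, b, of_real e, 0) / of_real e)) \<longlongrightarrow>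
      dX F (t^2 * a) (inverse t ^ 2 * b) * t^5) (at (0::real))" by simp
  from tendsto_mult[OF tendsto_const[of w] L1] have "((\<lambda>e. w * (F (a, b, of_real e, 0) / of_real e)) \<longlongrightarrow> w * dX F a b) (at (0::real))"
    by simp
  from tendsto_unique[OF _ L2' this] show "dX F (t^2 * a) (inverse t ^ 2 * b) * t^5 = w * dX F a b" by simp
  have M1: "((\<lambda>e. F (a, b, 0, of_real e) / of_real e) \<longlongrightarrow> dX F a b * 0 + dY F a b * 1) (at (0::real))"
    by (rule lin_curve[OF P F0 tendsto_const tendsto_const zero one])
  have M2: "((\<lambda>e. F (t^2 * a, inverse t ^ 2 * b, t^5 * 0, inverse t ^ 5 * of_real e) / of_real e) \<longlongrightarrow>
      dX F (t^2 * a) (inverse t ^ 2 * b) * 0 + dY F (t^2 * a) (inverse t ^ 2 * b) * inverse t ^ 5) (at (0::real))"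
    by (rule lin_curve[OF P F0 tendsto_const tendsto_const c0 c1])
  have "(\<lambda>e. F (t^2 * a, inverse t ^ 2 * b, t^5 * 0, inverse t ^ 5 * of_real e) / of_real e)
      = (\<lambda>e. w * (F (a, b, 0, of_real e) / of_real e))"
    using W[of "(a,b,0,of_real _)"] by (simp add: act_def)
  with M2 have M2': "((\<lambda>e. w * (F (a, b, 0, of_real e) / of_real e)) \<longlongrightarrow>
      dY F (t^2 * a) (inverse t ^ 2 * b) * inverse t ^ 5) (at (0::real))" by simp
  from tendsto_mult[OF tendsto_const[of w] M1] have "((\<lambda>e. w * (F (a, b, 0, of_real e) / of_real e)) \<longlongrightarrow> w * dY F a b) (at (0::real))"
    by simp
  from tendsto_unique[OF _ M2' this] show "dY F (t^2 * a) (inverse t ^ 2 * b) * inverse t ^ 5 = w * dY F a b" by simp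
qed


lemma polyfun_nonzero_const:
  assumes "polyfun f" "\<And>z. f z \<noteq> 0" shows "f z = f 0"
proof -
  obtain p where p: "\<And>z. f z = poly p z" using assms(1) unfolding polyfun_def by blast
  have "constant (poly p)"
    using fundamental_theorem_of_algebra[of p] assms(2) p by auto
  then show ?thesis unfolding constant_def p by blast
qed

lemma polyfun_tendsto_real:
  assumes "polyfun g" shows "((\<lambda>e::real. g (of_real e)) \<longlongrightarrow> g 0) (at 0)"
proof -
  have "isCont g 0" by (rule polyfun_cont[OF assms])
  then have "(g \<longlongrightarrow> g 0) (at 0)" by (simp add: isCont_def)
  moreover have "((\<lambda>e::real. of_real e :: complex) \<longlongrightarrow> 0) (at 0)"
    by (rule tendsto_eq_intros) (auto intro: tendsto_ident_at)
  ultimately show ?thesis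
    using isCont_tendsto_compose[OF \<open>isCont g 0\<close>] by blast
qed

lemma dXY_polyfun:
  assumes P: "poly4 F" and F0: "\<And>a b. F (a,b,0,0) = 0" and A: "polyfun A" and B: "polyfun B"
  shows "polyfun (\<lambda>z. dX F (A z) (B z))" "polyfun (\<lambda>z. dY F (A z) (B z))"
proof -
  obtain S c where S: "finite S" "\<And>p. F p = (\<Sum>s\<in>S. c s * mon s p)" using P poly4_alt by metis
  define Pc where "Pc a b = (\<Sum>s\<in>S. if ki s = 1 \<and> li s = 0 then c s * mon s (a,b,1,1) else 0)" for a b
  define Qc where "Qc a b = (\<Sum>s\<in>S. if ki s = 0 \<and> li s = 1 then c s * mon s (a,b,1,1) else 0)" for a b
  have one: "((\<lambda>e::real. of_real e / of_real e :: complex) \<longlongrightarrow> 1) (at 0)"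
  proof -
    have ev: "\<forall>\<^sub>F e in at (0::real). (of_real e / of_real e :: complex) = 1" by (auto simp: eventually_at_filter)
    show ?thesis by (subst tendsto_cong[OF ev]) simp
  qed
  have zero: "((\<lambda>e::real. 0 / of_real e :: complex) \<longlongrightarrow> 0) (at 0)" by simp
  have dX: "dX F a b = Pc a b" for a b
  proof -
    from lin_curve_gen[OF S F0 tendsto_const tendsto_const one zero, of a b]
    have "((\<lambda>e. F (a, b, of_real e, 0) / of_real e) \<longlongrightarrow> Pc a b) (at (0::real))"
      by (simp add: Pc_def)
    then show ?thesis unfolding dX_def by (rule tendsto_Lim[rotated]) simp
  qed
  have dY: "dY F a b = Qc a b" for a b
  proof -
    from lin_curve_gen[OF S F0 tendsto_const tendsto_const zero one, of a b]
    have "((\<lambda>e. F (a, b, 0, of_real e) / of_real e) \<longlongrightarrow> Qc a b) (at (0::real))"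
      by (simp add: Qc_def)
    then show ?thesis unfolding dY_def by (rule tendsto_Lim[rotated]) simp
  qed
  have m: "polyfun (\<lambda>z. c s * mon s (A z, B z, 1, 1))" for s
    using A B by (cases s) (auto simp: mon_def intro!: polyfun_mult polyfun_power)
  show "polyfun (\<lambda>z. dX F (A z) (B z))"
    unfolding dX Pc_def
  proof (intro polyfun_sum)
    fix s show "polyfun (\<lambda>z. if ki s = 1 \<and> li s = 0 then c s * mon s (A z, B z, 1, 1) else 0)"
      by (cases "ki s = 1 \<and> li s = 0") (simp_all only: if_True if_False m polyfun_const simp_thms)
  qed
  show "polyfun (\<lambda>z. dY F (A z) (B z))"
    unfolding dY Qc_def
  proof (intro polyfun_sum)
    fix s show "polyfun (\<lambda>z. if ki s = 0 \<and> li s = 1 then c s * mon s (A z, B z, 1, 1) else 0)"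
      by (cases "ki s = 0 \<and> li s = 1") (simp_all only: if_True if_False m polyfun_const simp_thms)
  qed
qed

context
  fixes f :: "pt \<Rightarrow> pt"
  assumes eqv: "equivariant f" and reg: "regular_map f"
begin

lemma lin_weight_X:
  assumes "t \<noteq> 0"
  shows "dX (cX f) (t^2 * a) (inverse t ^ 2 * b) = dX (cX f) a b"
    and "dY (cX f) (t^2 * a) (inverse t ^ 2 * b) = t^10 * dY (cX f) a b"
proof -
  have P: "poly4 (cX f)" using regular_map_comps[OF reg] by simp
  have F0: "\<And>a b. cX f (a,b,0,0) = 0" using XY_zero_on_Z[OF eqv] by simp
  note L = lin_weight[OF P F0 assms, of "t^5"]
  have W: "\<And>p. cX f (act t p) = t^5 * cX f p" using equivariant_comps(3)[OF eqv assms] by simp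
  from L(1)[OF W, of a b] assms show "dX (cX f) (t^2 * a) (inverse t ^ 2 * b) = dX (cX f) a b" by simp
  from L(2)[OF W, of a b] have "dY (cX f) (t^2 * a) (inverse t ^ 2 * b) * inverse t ^ 5 = t^5 * dY (cX f) a b" .
  then have "dY (cX f) (t^2 * a) (inverse t ^ 2 * b) = t^5 * dY (cX f) a b * t^5"
    using assms by (simp add: field_simps)
  then show "dY (cX f) (t^2 * a) (inverse t ^ 2 * b) = t^10 * dY (cX f) a b"
    by (simp add: algebra_simps power_add[symmetric])
qed

lemma lin_weight_Y:
  assumes "t \<noteq> 0"
  shows "dX (cY f) (t^2 * a) (inverse t ^ 2 * b) = inverse t ^ 10 * dX (cY f) a b"
    and "dY (cY f) (t^2 * a) (inverse t ^ 2 * b) = dY (cY f) a b"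
proof -
  have P: "poly4 (cY f)" using regular_map_comps[OF reg] by simp
  have F0: "\<And>a b. cY f (a,b,0,0) = 0" using XY_zero_on_Z[OF eqv] by simp
  note L = lin_weight[OF P F0 assms, of "inverse t ^ 5"]
  have W: "\<And>p. cY f (act t p) = inverse t ^ 5 * cY f p" using equivariant_comps(4)[OF eqv assms] by simp
  from L(2)[OF W, of a b] assms show "dY (cY f) (t^2 * a) (inverse t ^ 2 * b) = dY (cY f) a b" by simp
  from L(1)[OF W, of a b] have "dX (cY f) (t^2 * a) (inverse t ^ 2 * b) * t ^ 5 = inverse t ^ 5 * dX (cY f) a b" .
  then have "dX (cY f) (t^2 * a) (inverse t ^ 2 * b) = inverse t ^ 5 * dX (cY f) a b * inverse t ^ 5"
    using assms by (simp add: field_simps)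
  then show "dX (cY f) (t^2 * a) (inverse t ^ 2 * b) = inverse t ^ 10 * dX (cY f) a b"
    by (simp add: algebra_simps power_add[symmetric])
qed

lemma W_XX: "a \<noteq> 0 \<Longrightarrow> dX (cX f) a b = dX (cX f) 1 (a*b)"
proof -
  assume a: "a \<noteq> 0"
  define t where "t = csqrt a"
  have t2: "t^2 = a" by (simp add: t_def)
  then have t0: "t \<noteq> 0" using a by auto
  have "inverse t ^ 2 * (a * b) = b" using t2 a by (simp add: power_inverse)
  with lin_weight_X(1)[OF t0, of 1 "a*b"] t2 show ?thesis by simp
qed

lemma W_XY: "a \<noteq> 0 \<Longrightarrow> dY (cX f) a b = a^5 * dY (cX f) 1 (a*b)"
proof -
  assume a: "a \<noteq> 0"
  define t where "t = csqrt a"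
  have t2: "t^2 = a" by (simp add: t_def)
  then have t0: "t \<noteq> 0" using a by auto
  have e: "inverse t ^ 2 * (a * b) = b" using t2 a by (simp add: power_inverse)
  have t10: "t^10 = a^5" using t2 by (metis power_mult numeral_times_numeral semiring_norm(12) num_double)
  have "dY (cX f) a b = t^10 * dY (cX f) 1 (a*b)"
    using lin_weight_X(2)[OF t0, of 1 "a*b"] by (simp only: mult_1_right t2 e)
  then show ?thesis by (simp only: t10)
qed

lemma W_YY: "a \<noteq> 0 \<Longrightarrow> dY (cY f) a b = dY (cY f) 1 (a*b)"
proof -
  assume a: "a \<noteq> 0"
  define t where "t = csqrt a"
  have t2: "t^2 = a" by (simp add: t_def)
  then have t0: "t \<noteq> 0" using a by auto
  have "inverse t ^ 2 * (a * b) = b" using t2 a by (simp add: power_inverse)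
  with lin_weight_Y(2)[OF t0, of 1 "a*b"] t2 show ?thesis by simp
qed

lemma W_YX: "b \<noteq> 0 \<Longrightarrow> dX (cY f) a b = b^5 * dX (cY f) (a*b) 1"
proof -
  assume b: "b \<noteq> 0"
  define t where "t = inverse (csqrt b)"
  have t2: "inverse t ^ 2 = b" by (simp add: t_def)
  then have t0: "t \<noteq> 0" using b by auto
  have tt: "t^2 = inverse b" using t2 by (metis inverse_inverse_eq power_inverse)
  have e: "t^2 * (a * b) = a" using tt b by simp
  have t10: "inverse t ^ 10 = b^5" using t2 by (metis power_mult numeral_times_numeral semiring_norm(12) num_double)
  have "dX (cY f) a b = inverse t ^ 10 * dX (cY f) (a*b) 1"
    using lin_weight_Y(1)[OF t0, of "a*b" 1] by (simp only: mult_1_right t2 e)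
  then show ?thesis by (simp only: t10)
qed

end


lemma mu_lin_eval:
  "mu_lin d0 d1 (A,B,X,Y) =
    (cnj B, cnj A,
     (1 - (cnj B * cnj A) * (of_real d0 + of_real d1 * (cnj B * cnj A))^2) * cnj Y
        + cnj B ^ 5 * (of_real d0 + of_real d1 * (cnj B * cnj A))^5 * cnj X,
     - (cnj A ^ 5 * (of_real d0 + of_real d1 * (cnj B * cnj A))^5) * cnj Y
        + (\<Sum>j<5. ((cnj B * cnj A) * (of_real d0 + of_real d1 * (cnj B * cnj A))^2)^j) * cnj X)"
  by (simp add: mu_lin_def phi_lin_def mu0_def Let_def)

definition Sg :: "complex \<Rightarrow> complex" where "Sg u = (\<Sum>j<5. u^j)"

lemma det2_inv:
  fixes a11 a12 a21 a22 b11 b12 b21 b22 :: complex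
  assumes "a11*b11 + a12*b21 = 1" "a11*b12 + a12*b22 = 0" "a21*b11 + a22*b21 = 0" "a21*b12 + a22*b22 = 1"
  shows "(a11*a22 - a12*a21) * (b11*b22 - b12*b21) = 1"
proof -
  have "(a11*a22 - a12*a21) * (b11*b22 - b12*b21) =
    (a11*b11 + a12*b21)*(a21*b12 + a22*b22) - (a11*b12 + a12*b22)*(a21*b11 + a22*b21)"
    by (simp add: algebra_simps)
  then show ?thesis using assms by simp
qed

lemma ev_div_const: "((\<lambda>e::real. of_real e * c / of_real e :: complex) \<longlongrightarrow> c) (at 0)"
proof -
  have ev: "\<forall>\<^sub>F e in at (0::real). (of_real e * c / of_real e :: complex) = c" by (auto simp: eventually_at_filter)
  show ?thesis by (subst tendsto_cong[OF ev]) simp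
qed

locale conjdata =
  fixes c0 c1 d0 d1 :: real and \<psi> \<phi> :: "pt \<Rightarrow> pt"
  assumes reg\<psi>: "regular_map \<psi>" and reg\<phi>: "regular_map \<phi>"
  and eq\<psi>: "equivariant \<psi>" and eq\<phi>: "equivariant \<phi>"
  and inv1: "\<And>p. \<phi> (\<psi> p) = p"
  and conj: "\<And>p. mu_lin d0 d1 (\<psi> p) = \<psi> (mu_lin c0 c1 p)"
begin

definition "\<alpha> = cA \<psi> (1,0,0,0)"
definition "\<beta> = cB \<psi> (0,1,0,0)"

lemma psi_1t: "\<psi> (1,t,0,0) = (cA \<psi> (1,t,0,0), t * cB \<psi> (t,1,0,0), 0, 0)"
  using pt_eq_comp[of \<psi> "(1,t,0,0)"] B_on_Z[OF eq\<psi> reg\<psi>, of 1 t] XY_zero_on_Z[OF eq\<psi>] by simp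

lemma psi_t1: "\<psi> (t,1,0,0) = (t * cA \<psi> (1,t,0,0), cB \<psi> (t,1,0,0), 0, 0)"
  using pt_eq_comp[of \<psi> "(t,1,0,0)"] A_on_Z[OF eq\<psi> reg\<psi>, of t 1] XY_zero_on_Z[OF eq\<psi>] by simp

lemma U_nz: "cA \<psi> (1,t,0,0) \<noteq> 0"
proof
  assume "cA \<psi> (1,t,0,0) = 0"
  then have "\<psi> (1,t,0,0) = (0, t * cB \<psi> (t,1,0,0), 0, 0)" using psi_1t by simp
  then have "cA \<phi> (\<psi> (1,t,0,0)) = 0" using A_on_Z[OF eq\<phi> reg\<phi>, of 0 "t * cB \<psi> (t,1,0,0)"] by (simp only: mult_zero_left)
  moreover have "cA \<phi> (\<psi> (1,t,0,0)) = 1" using inv1 by (simp add: cA_def)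
  ultimately show False by simp
qed

lemma V_nz: "cB \<psi> (t,1,0,0) \<noteq> 0"
proof
  assume "cB \<psi> (t,1,0,0) = 0"
  then have "\<psi> (t,1,0,0) = (t * cA \<psi> (1,t,0,0), 0, 0, 0)" using psi_t1 by simp
  then have "cB \<phi> (\<psi> (t,1,0,0)) = 0" using B_on_Z[OF eq\<phi> reg\<phi>, of "t * cA \<psi> (1,t,0,0)" 0] by (simp only: mult_zero_left)
  moreover have "cB \<phi> (\<psi> (t,1,0,0)) = 1" using inv1 by (simp add: cB_def)
  ultimately show False by simp
qed

lemma U_const: "cA \<psi> (1,t,0,0) = \<alpha>"
proof -
  have "polyfun (\<lambda>t. cA \<psi> (1,t,0,0))"
    by (rule poly4_polyfun_line) (use regular_map_comps[OF reg\<psi>] in auto)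
  from polyfun_nonzero_const[OF this U_nz] show ?thesis by (simp add: \<alpha>_def)
qed

lemma V_const: "cB \<psi> (t,1,0,0) = \<beta>"
proof -
  have "polyfun (\<lambda>t. cB \<psi> (t,1,0,0))"
    by (rule poly4_polyfun_line) (use regular_map_comps[OF reg\<psi>] in auto)
  from polyfun_nonzero_const[OF this V_nz] show ?thesis by (simp add: \<beta>_def)
qed

lemma alpha_nz: "\<alpha> \<noteq> 0" using U_nz U_const by metis
lemma beta_nz: "\<beta> \<noteq> 0" using V_nz V_const by metis

lemma psiZ: "\<psi> (a,b,0,0) = (\<alpha> * a, \<beta> * b, 0, 0)"
proof -
  have "cA \<psi> (a,b,0,0) = \<alpha> * a" using A_on_Z[OF eq\<psi> reg\<psi>, of a b] U_const[of "a*b"] by (simp add: mult.commute)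
  moreover have "cB \<psi> (a,b,0,0) = \<beta> * b" using B_on_Z[OF eq\<psi> reg\<psi>, of a b] V_const[of "a*b"] by (simp add: mult.commute)
  ultimately show ?thesis using pt_eq_comp[of \<psi> "(a,b,0,0)"] XY_zero_on_Z[OF eq\<psi>, of a b] by simp
qed

lemma alpha_beta: "\<alpha> = cnj \<beta>"
proof -
  have "mu_lin c0 c1 (1,1,0,0) = (1,1,0,0)" by (simp only: mu_lin_eval complex_cnj_zero complex_cnj_one mult_zero_right add_0_right mult_zero_left add_0_left minus_zero)
  then have "mu_lin d0 d1 (\<psi> (1,1,0,0)) = \<psi> (1,1,0,0)" using conj by simp
  then have "mu_lin d0 d1 (\<alpha>, \<beta>, 0, 0) = (\<alpha>, \<beta>, 0, 0)" by (simp add: psiZ)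
  then have "fst (mu_lin d0 d1 (\<alpha>, \<beta>, 0, 0)) = \<alpha>" by simp
  moreover have "fst (mu_lin d0 d1 (\<alpha>, \<beta>, 0, 0)) = cnj \<beta>" by (simp only: mu_lin_eval fst_conv)
  ultimately show ?thesis by simp
qed

definition "w0 = \<alpha> * cnj \<alpha>"

lemma w0_real: "w0 = of_real ((cmod \<alpha>)^2)"
  by (simp only: w0_def complex_norm_square)

lemma ab_w0: "\<alpha> * \<beta> = w0"
  using alpha_beta by (simp add: w0_def)

lemma phiZ: "\<phi> (a,b,0,0) = (a / \<alpha>, b / \<beta>, 0, 0)"
proof -
  have "\<phi> (\<psi> (a / \<alpha>, b / \<beta>, 0, 0)) = (a / \<alpha>, b / \<beta>, 0, 0)" by (rule inv1)
  then show ?thesis using alpha_nz beta_nz by (simp add: psiZ)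
qed

definition "pp t = dX (cX \<psi>) 1 t"
definition "qq t = dY (cX \<psi>) 1 t"
definition "rr t = dX (cY \<psi>) t 1"
definition "ss t = dY (cY \<psi>) 1 t"
definition "pp2 t = dX (cX \<phi>) 1 t"
definition "qq2 t = dY (cX \<phi>) 1 t"
definition "rr2 t = dX (cY \<phi>) t 1"
definition "ss2 t = dY (cY \<phi>) 1 t"

lemma polyfuns: "polyfun pp" "polyfun qq" "polyfun rr" "polyfun ss"
    "polyfun pp2" "polyfun qq2" "polyfun rr2" "polyfun ss2"
proof -
  note R = regular_map_comps[OF reg\<psi>] regular_map_comps[OF reg\<phi>]
  note Z = XY_zero_on_Z[OF eq\<psi>] XY_zero_on_Z[OF eq\<phi>]
  show "polyfun pp" unfolding pp_def[abs_def]
    by (rule dXY_polyfun(1)[OF R(3)]) (auto simp: Z)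
  show "polyfun qq" unfolding qq_def[abs_def]
    by (rule dXY_polyfun(2)[OF R(3)]) (auto simp: Z)
  show "polyfun rr" unfolding rr_def[abs_def]
    by (rule dXY_polyfun(1)[OF R(4)]) (auto simp: Z)
  show "polyfun ss" unfolding ss_def[abs_def]
    by (rule dXY_polyfun(2)[OF R(4)]) (auto simp: Z)
  show "polyfun pp2" unfolding pp2_def[abs_def]
    by (rule dXY_polyfun(1)[OF R(7)]) (auto simp: Z)
  show "polyfun qq2" unfolding qq2_def[abs_def]
    by (rule dXY_polyfun(2)[OF R(7)]) (auto simp: Z)
  show "polyfun rr2" unfolding rr2_def[abs_def]
    by (rule dXY_polyfun(1)[OF R(8)]) (auto simp: Z)
  show "polyfun ss2" unfolding ss2_def[abs_def]
    by (rule dXY_polyfun(2)[OF R(8)]) (auto simp: Z)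
qed

lemma psi_lin:
  assumes "t \<noteq> 0"
  shows "((\<lambda>e. cA \<psi> (1, t, of_real e * x, of_real e * y)) \<longlongrightarrow> \<alpha>) (at (0::real))"
    "((\<lambda>e. cB \<psi> (1, t, of_real e * x, of_real e * y)) \<longlongrightarrow> \<beta> * t) (at (0::real))"
    "((\<lambda>e. cX \<psi> (1, t, of_real e * x, of_real e * y) / of_real e) \<longlongrightarrow> pp t * x + qq t * y) (at (0::real))"
    "((\<lambda>e. cY \<psi> (1, t, of_real e * x, of_real e * y) / of_real e) \<longlongrightarrow> t^5 * rr t * x + ss t * y) (at (0::real))"
proof -
  note R = regular_map_comps[OF reg\<psi>]
  note Z = XY_zero_on_Z[OF eq\<psi>]
  have pA: "polyfun (\<lambda>z. cA \<psi> (1, t, z * x, z * y))"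
    by (rule poly4_curve[OF R(1)]) (auto intro!: polyfun_mult)
  from polyfun_tendsto_real[OF pA] show "((\<lambda>e. cA \<psi> (1, t, of_real e * x, of_real e * y)) \<longlongrightarrow> \<alpha>) (at (0::real))"
    by (simp add: psiZ cA_def)
  have pB: "polyfun (\<lambda>z. cB \<psi> (1, t, z * x, z * y))"
    by (rule poly4_curve[OF R(2)]) (auto intro!: polyfun_mult)
  from polyfun_tendsto_real[OF pB] show "((\<lambda>e. cB \<psi> (1, t, of_real e * x, of_real e * y)) \<longlongrightarrow> \<beta> * t) (at (0::real))"
    by (simp add: psiZ cB_def)
  have LX: "((\<lambda>e. cX \<psi> (1, t, of_real e * x, of_real e * y) / of_real e) \<longlongrightarrow>
      dX (cX \<psi>) 1 t * x + dY (cX \<psi>) 1 t * y) (at (0::real))"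
    by (rule lin_curve[OF R(3) Z(1) tendsto_const tendsto_const ev_div_const ev_div_const])
  then show "((\<lambda>e. cX \<psi> (1, t, of_real e * x, of_real e * y) / of_real e) \<longlongrightarrow> pp t * x + qq t * y) (at (0::real))"
    by (simp add: pp_def qq_def)
  have LY: "((\<lambda>e. cY \<psi> (1, t, of_real e * x, of_real e * y) / of_real e) \<longlongrightarrow>
      dX (cY \<psi>) 1 t * x + dY (cY \<psi>) 1 t * y) (at (0::real))"
    by (rule lin_curve[OF R(4) Z(2) tendsto_const tendsto_const ev_div_const ev_div_const])
  moreover have "dX (cY \<psi>) 1 t = t^5 * rr t"
    using W_YX[OF eq\<psi> reg\<psi> assms, of 1] by (simp add: rr_def)
  ultimately show "((\<lambda>e. cY \<psi> (1, t, of_real e * x, of_real e * y) / of_real e) \<longlongrightarrow> t^5 * rr t * x + ss t * y) (at (0::real))"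
    by (simp add: ss_def)
qed

end


lemma mu_lin_eval2:
  "mu_lin d0 d1 (A,B,X,Y) =
    (let T = cnj B * cnj A; h = of_real d0 + of_real d1 * T in
    (cnj B, cnj A, (1 - T * h^2) * cnj Y + cnj B ^ 5 * h^5 * cnj X,
     - (cnj A ^ 5 * h^5) * cnj Y + Sg (T * h^2) * cnj X))"
  by (simp only: mu_lin_eval Sg_def Let_def)

context conjdata
begin

lemma chain:
  assumes t: "t \<noteq> 0"
  shows "x = pp2 (w0*t) * (pp t * x + qq t * y) + \<alpha>^5 * qq2 (w0*t) * (t^5 * rr t * x + ss t * y)"
    and "y = (\<beta>*t)^5 * rr2 (w0*t) * (pp t * x + qq t * y) + ss2 (w0*t) * (t^5 * rr t * x + ss t * y)"
proof -
  note R = regular_map_comps[OF reg\<phi>]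
  note Z = XY_zero_on_Z[OF eq\<phi>]
  note L = psi_lin[OF t, of x y]
  have bt: "\<beta> * t \<noteq> 0" using beta_nz t by simp
  have comp: "cX \<phi> (cA \<psi> p, cB \<psi> p, cX \<psi> p, cY \<psi> p) = fst (snd (snd p))"
     "cY \<phi> (cA \<psi> p, cB \<psi> p, cX \<psi> p, cY \<psi> p) = snd (snd (snd p))" for p
  proof -
    have e: "(cA \<psi> p, cB \<psi> p, cX \<psi> p, cY \<psi> p) = \<psi> p" by (simp add: cA_def cB_def cX_def cY_def)
    show "cX \<phi> (cA \<psi> p, cB \<psi> p, cX \<psi> p, cY \<psi> p) = fst (snd (snd p))"
      unfolding e by (simp add: cX_def inv1)
    show "cY \<phi> (cA \<psi> p, cB \<psi> p, cX \<psi> p, cY \<psi> p) = snd (snd (snd p))"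
      unfolding e by (simp add: cY_def inv1)
  qed
  have LX: "((\<lambda>e. cX \<phi> (cA \<psi> (1, t, of_real e * x, of_real e * y), cB \<psi> (1, t, of_real e * x, of_real e * y),
       cX \<psi> (1, t, of_real e * x, of_real e * y), cY \<psi> (1, t, of_real e * x, of_real e * y)) / of_real e) \<longlongrightarrow>
      dX (cX \<phi>) \<alpha> (\<beta>*t) * (pp t * x + qq t * y) + dY (cX \<phi>) \<alpha> (\<beta>*t) * (t^5 * rr t * x + ss t * y)) (at (0::real))"
    by (rule lin_curve[OF R(3) Z(1) L])
  then have LX': "((\<lambda>e. of_real e * x / of_real e) \<longlongrightarrow>
      dX (cX \<phi>) \<alpha> (\<beta>*t) * (pp t * x + qq t * y) + dY (cX \<phi>) \<alpha> (\<beta>*t) * (t^5 * rr t * x + ss t * y)) (at (0::real))"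
    by (simp only: comp fst_conv snd_conv)
  have X: "x = dX (cX \<phi>) \<alpha> (\<beta>*t) * (pp t * x + qq t * y) + dY (cX \<phi>) \<alpha> (\<beta>*t) * (t^5 * rr t * x + ss t * y)"
    by (rule tendsto_unique[OF _ ev_div_const LX']) simp
  have LY: "((\<lambda>e. cY \<phi> (cA \<psi> (1, t, of_real e * x, of_real e * y), cB \<psi> (1, t, of_real e * x, of_real e * y),
       cX \<psi> (1, t, of_real e * x, of_real e * y), cY \<psi> (1, t, of_real e * x, of_real e * y)) / of_real e) \<longlongrightarrow>
      dX (cY \<phi>) \<alpha> (\<beta>*t) * (pp t * x + qq t * y) + dY (cY \<phi>) \<alpha> (\<beta>*t) * (t^5 * rr t * x + ss t * y)) (at (0::real))"
    by (rule lin_curve[OF R(4) Z(2) L])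
  then have LY': "((\<lambda>e. of_real e * y / of_real e) \<longlongrightarrow>
      dX (cY \<phi>) \<alpha> (\<beta>*t) * (pp t * x + qq t * y) + dY (cY \<phi>) \<alpha> (\<beta>*t) * (t^5 * rr t * x + ss t * y)) (at (0::real))"
    by (simp only: comp fst_conv snd_conv)
  have Y: "y = dX (cY \<phi>) \<alpha> (\<beta>*t) * (pp t * x + qq t * y) + dY (cY \<phi>) \<alpha> (\<beta>*t) * (t^5 * rr t * x + ss t * y)"
    by (rule tendsto_unique[OF _ ev_div_const LY']) simp
  have ab: "\<alpha> * (\<beta> * t) = w0 * t" using ab_w0 by (simp add: mult.assoc[symmetric])
  have d1: "dX (cX \<phi>) \<alpha> (\<beta>*t) = pp2 (w0*t)"
    using W_XX[OF eq\<phi> reg\<phi> alpha_nz, of "\<beta>*t"] ab by (simp add: pp2_def)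
  have d2: "dY (cX \<phi>) \<alpha> (\<beta>*t) = \<alpha>^5 * qq2 (w0*t)"
    using W_XY[OF eq\<phi> reg\<phi> alpha_nz, of "\<beta>*t"] ab by (simp add: qq2_def)
  have d3: "dX (cY \<phi>) \<alpha> (\<beta>*t) = (\<beta>*t)^5 * rr2 (w0*t)"
    using W_YX[OF eq\<phi> reg\<phi> bt, of \<alpha>] ab by (simp add: rr2_def)
  have d4: "dY (cY \<phi>) \<alpha> (\<beta>*t) = ss2 (w0*t)"
    using W_YY[OF eq\<phi> reg\<phi> alpha_nz, of "\<beta>*t"] ab by (simp add: ss2_def)
  show "x = pp2 (w0*t) * (pp t * x + qq t * y) + \<alpha>^5 * qq2 (w0*t) * (t^5 * rr t * x + ss t * y)"
    using X by (simp only: d1 d2)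
  show "y = (\<beta>*t)^5 * rr2 (w0*t) * (pp t * x + qq t * y) + ss2 (w0*t) * (t^5 * rr t * x + ss t * y)"
    using Y by (simp only: d3 d4)
qed

definition "dd t = pp t * ss t - t^5 * qq t * rr t"
definition "dd2 t = pp2 t * ss2 t - t^5 * qq2 t * rr2 t"

lemma dd_prod: "t \<noteq> 0 \<Longrightarrow> dd2 (w0*t) * dd t = 1"
proof -
  assume t: "t \<noteq> 0"
  note c10 = chain[OF t, of 1 0] and c01 = chain[OF t, of 0 1]
  have "(pp2 (w0*t) * ss2 (w0*t) - (\<alpha>^5 * qq2 (w0*t)) * ((\<beta>*t)^5 * rr2 (w0*t))) *
        (pp t * ss t - qq t * (t^5 * rr t)) = 1"
    by (rule det2_inv) (use c10 c01 in \<open>simp_all add: algebra_simps\<close>)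
  moreover have "(\<alpha>^5 * A) * ((\<beta>*t)^5 * B) = (w0*t)^5 * A * B" for A B
  proof -
    have "(\<alpha>^5 * A) * ((\<beta>*t)^5 * B) = (\<alpha>*\<beta>*t)^5 * A * B" by (simp add: power_mult_distrib mult_ac)
    then show ?thesis by (simp add: ab_w0)
  qed
  ultimately have "(pp2 (w0*t) * ss2 (w0*t) - (w0*t)^5 * qq2 (w0*t) * rr2 (w0*t)) *
        (pp t * ss t - qq t * (t^5 * rr t)) = 1" by simp
  then show ?thesis
    unfolding dd_def dd2_def by (simp add: mult_ac)
qed

lemma dd_polyfun: "polyfun dd" "polyfun dd2"
  unfolding dd_def[abs_def] dd2_def[abs_def]
  by (intro polyfun_diff polyfun_mult polyfun_power polyfuns polyfun_id)+

lemma dd_const: "dd t = dd 0" and dd0_nz: "dd 0 \<noteq> 0"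
proof -
  have pf: "polyfun (\<lambda>t. dd2 (w0*t) * dd t)"
    by (rule polyfun_mult[OF polyfun_compose[OF dd_polyfun(2) polyfun_mult[OF polyfun_const polyfun_id]] dd_polyfun(1)])
  have all: "dd2 (w0*z) * dd z = 1" for z
    by (rule polyfun_eq_reals[OF pf polyfun_const]) (simp add: dd_prod)
  then have nz: "dd z \<noteq> 0" for z by (metis mult_zero_right zero_neq_one)
  show "dd t = dd 0" by (rule polyfun_nonzero_const[OF dd_polyfun(1) nz])
  show "dd 0 \<noteq> 0" by (rule nz)
qed

end


context conjdata
begin

lemma mu_c_line:
  fixes \<sigma> e :: real
  defines "t \<equiv> complex_of_real \<sigma>"
  defines "H \<equiv> complex_of_real c0 + complex_of_real c1 * t"
  shows "mu_lin c0 c1 (1, t, of_real e * x, of_real e * y) =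
    (t, 1, of_real e * ((1 - t * H^2) * cnj y + t^5 * H^5 * cnj x),
           of_real e * (- (H^5) * cnj y + Sg (t * H^2) * cnj x))"
proof -
  have ct: "cnj t = t" by (simp add: t_def)
  show ?thesis
    unfolding mu_lin_eval2 Let_def by (simp add: ct H_def algebra_simps)
qed

lemma lin_eqs:
  fixes \<sigma> :: real and x y :: complex
  assumes s0: "\<sigma> \<noteq> 0"
  defines "t \<equiv> complex_of_real \<sigma>"
  defines "H \<equiv> complex_of_real c0 + complex_of_real c1 * t"
  defines "g \<equiv> complex_of_real d0 + complex_of_real d1 * (w0 * t)"
  defines "m1 \<equiv> (1 - t * H^2) * cnj y + t^5 * H^5 * cnj x"
  defines "m2 \<equiv> - (H^5) * cnj y + Sg (t * H^2) * cnj x"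
  defines "X1 \<equiv> pp t * x + qq t * y"
  defines "Y1 \<equiv> t^5 * rr t * x + ss t * y"
  shows "pp t * m1 + t^5 * qq t * m2 = (1 - w0 * t * g^2) * cnj Y1 + \<alpha>^5 * t^5 * g^5 * cnj X1"
    and "rr t * m1 + ss t * m2 = - (cnj \<alpha> ^ 5 * g^5) * cnj Y1 + Sg (w0 * t * g^2) * cnj X1"
proof -
  have t0: "t \<noteq> 0" using s0 by (simp add: t_def)
  have ct: "cnj t = t" by (simp add: t_def)
  note R = regular_map_comps[OF reg\<psi>]
  note Z = XY_zero_on_Z[OF eq\<psi>]
  note L = psi_lin[OF t0, of x y]
  define pe where "pe e = ((1::complex), t, complex_of_real e * x, complex_of_real e * y)" for e :: real
  have mc: "mu_lin c0 c1 (pe e) = (t, 1, of_real e * m1, of_real e * m2)" for e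
    unfolding pe_def m1_def m2_def H_def t_def by (rule mu_c_line)
  have LX: "((\<lambda>e. cX \<psi> (t, 1, of_real e * m1, of_real e * m2) / of_real e) \<longlongrightarrow>
      dX (cX \<psi>) t 1 * m1 + dY (cX \<psi>) t 1 * m2) (at (0::real))"
    by (rule lin_curve[OF R(3) Z(1) tendsto_const tendsto_const ev_div_const ev_div_const])
  have LY: "((\<lambda>e. cY \<psi> (t, 1, of_real e * m1, of_real e * m2) / of_real e) \<longlongrightarrow>
      dX (cY \<psi>) t 1 * m1 + dY (cY \<psi>) t 1 * m2) (at (0::real))"
    by (rule lin_curve[OF R(4) Z(2) tendsto_const tendsto_const ev_div_const ev_div_const])
  have e1: "dX (cX \<psi>) t 1 = pp t" using W_XX[OF eq\<psi> reg\<psi> t0, of 1] by (simp add: pp_def)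
  have e2: "dY (cX \<psi>) t 1 = t^5 * qq t" using W_XY[OF eq\<psi> reg\<psi> t0, of 1] by (simp add: qq_def)
  have e3: "dX (cY \<psi>) t 1 = rr t" by (simp add: rr_def)
  have e4: "dY (cY \<psi>) t 1 = ss t" using W_YY[OF eq\<psi> reg\<psi> t0, of 1] by (simp add: ss_def)
  define Ae where "Ae e = cA \<psi> (pe e)" for e
  define Be where "Be e = cB \<psi> (pe e)" for e
  define Xe where "Xe e = cX \<psi> (pe e)" for e
  define Ye where "Ye e = cY \<psi> (pe e)" for e
  have LA: "(Ae \<longlongrightarrow> \<alpha>) (at (0::real))" unfolding Ae_def[abs_def] pe_def by (rule L(1))
  have LB: "(Be \<longlongrightarrow> \<beta> * t) (at (0::real))" unfolding Be_def[abs_def] pe_def by (rule L(2))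
  have LXe: "((\<lambda>e. Xe e / of_real e) \<longlongrightarrow> X1) (at (0::real))" unfolding Xe_def[abs_def] pe_def X1_def by (rule L(3))
  have LYe: "((\<lambda>e. Ye e / of_real e) \<longlongrightarrow> Y1) (at (0::real))" unfolding Ye_def[abs_def] pe_def Y1_def by (rule L(4))
  have cdiv: "cnj z / complex_of_real e = cnj (z / complex_of_real e)" for z e by simp
  have psi_pe: "\<psi> (pe e) = (Ae e, Be e, Xe e, Ye e)" for e
    by (simp add: Ae_def Be_def Xe_def Ye_def cA_def cB_def cX_def cY_def)
  define Te where "Te e = cnj (Be e) * cnj (Ae e)" for e
  define he where "he e = complex_of_real d0 + complex_of_real d1 * Te e" for e
  have RXeq: "cX \<psi> (mu_lin c0 c1 (pe e)) / of_real e =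
      (1 - Te e * he e ^ 2) * cnj (Ye e / of_real e) + cnj (Be e) ^ 5 * he e ^ 5 * cnj (Xe e / of_real e)" for e
  proof -
    have "cX \<psi> (mu_lin c0 c1 (pe e)) = fst (snd (snd (mu_lin d0 d1 (\<psi> (pe e)))))"
      using conj[of "pe e"] by (simp add: cX_def)
    also have "\<dots> = (1 - Te e * he e ^ 2) * cnj (Ye e) + cnj (Be e) ^ 5 * he e ^ 5 * cnj (Xe e)"
      unfolding psi_pe mu_lin_eval2 Let_def Te_def he_def by simp
    finally show ?thesis by (simp add: add_divide_distrib)
  qed
  have RYeq: "cY \<psi> (mu_lin c0 c1 (pe e)) / of_real e =
      - (cnj (Ae e) ^ 5 * he e ^ 5) * cnj (Ye e / of_real e) + Sg (Te e * he e ^ 2) * cnj (Xe e / of_real e)" for e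
  proof -
    have "cY \<psi> (mu_lin c0 c1 (pe e)) = snd (snd (snd (mu_lin d0 d1 (\<psi> (pe e)))))"
      using conj[of "pe e"] by (simp add: cY_def)
    also have "\<dots> = - (cnj (Ae e) ^ 5 * he e ^ 5) * cnj (Ye e) + Sg (Te e * he e ^ 2) * cnj (Xe e)"
      unfolding psi_pe mu_lin_eval2 Let_def Te_def he_def by simp
    finally show ?thesis by (simp add: add_divide_distrib diff_divide_distrib)
  qed
  have T0: "cnj (\<beta> * t) * cnj \<alpha> = w0 * t"
    using alpha_beta ct by (simp add: w0_def mult_ac)
  have cb: "cnj (\<beta> * t) = \<alpha> * t" using alpha_beta ct by simp
  have LTe: "(Te \<longlongrightarrow> w0 * t) (at (0::real))"
    unfolding Te_def[abs_def] T0[symmetric] by (intro tendsto_intros LA LB)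
  have Lhe: "(he \<longlongrightarrow> g) (at (0::real))"
    unfolding he_def[abs_def] g_def by (intro tendsto_intros LTe)
  have RX: "((\<lambda>e. (1 - Te e * he e ^ 2) * cnj (Ye e / of_real e) + cnj (Be e) ^ 5 * he e ^ 5 * cnj (Xe e / of_real e))
     \<longlongrightarrow> (1 - w0 * t * g ^ 2) * cnj Y1 + (\<alpha> * t) ^ 5 * g ^ 5 * cnj X1) (at (0::real))"
    unfolding cb[symmetric] by (intro tendsto_intros LTe Lhe LB LXe LYe)
  have RY: "((\<lambda>e. - (cnj (Ae e) ^ 5 * he e ^ 5) * cnj (Ye e / of_real e) + Sg (Te e * he e ^ 2) * cnj (Xe e / of_real e))
     \<longlongrightarrow> - (cnj \<alpha> ^ 5 * g ^ 5) * cnj Y1 + Sg (w0 * t * g ^ 2) * cnj X1) (at (0::real))"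
  proof -
    have cS: "isCont Sg z" for z unfolding Sg_def[abs_def] by (intro continuous_intros)
    have "((\<lambda>e. Sg (Te e * he e ^ 2)) \<longlongrightarrow> Sg (w0 * t * g ^ 2)) (at (0::real))"
      by (rule isCont_tendsto_compose[OF cS]) (intro tendsto_intros LTe Lhe)
    then show ?thesis by (intro tendsto_intros LA LTe Lhe LXe LYe)
  qed
  have LX2: "((\<lambda>e. cX \<psi> (mu_lin c0 c1 (pe e)) / of_real e) \<longlongrightarrow> pp t * m1 + t^5 * qq t * m2) (at (0::real))"
    using LX unfolding mc e1 e2 .
  have LY2: "((\<lambda>e. cY \<psi> (mu_lin c0 c1 (pe e)) / of_real e) \<longlongrightarrow> rr t * m1 + ss t * m2) (at (0::real))"
    using LY unfolding mc e3 e4 .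
  have "pp t * m1 + t^5 * qq t * m2 = (1 - w0 * t * g ^ 2) * cnj Y1 + (\<alpha> * t) ^ 5 * g ^ 5 * cnj X1"
    by (rule tendsto_unique[OF _ LX2]) (use RX RXeq in simp_all)
  then show "pp t * m1 + t^5 * qq t * m2 = (1 - w0 * t * g^2) * cnj Y1 + \<alpha>^5 * t^5 * g^5 * cnj X1"
    by (simp add: power_mult_distrib)
  show "rr t * m1 + ss t * m2 = - (cnj \<alpha> ^ 5 * g^5) * cnj Y1 + Sg (w0 * t * g^2) * cnj X1"
    by (rule tendsto_unique[OF _ LY2]) (use RY RYeq in simp_all)
qed


lemma E_eqs:
  fixes \<sigma> :: real
  assumes s0: "\<sigma> \<noteq> 0"
  defines "t \<equiv> complex_of_real \<sigma>"
  defines "H \<equiv> complex_of_real c0 + complex_of_real c1 * t"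
  defines "g \<equiv> complex_of_real d0 + complex_of_real d1 * (w0 * t)"
  shows "pp t * (1 - t*H^2) - t^5 * qq t * H^5 = (1 - w0*t*g^2) * cnj (ss t) + \<alpha>^5*t^5*g^5 * cnj (qq t)"
    and "pp t * H^5 + qq t * Sg (t*H^2) = (1 - w0*t*g^2) * cnj (rr t) + \<alpha>^5 * g^5 * cnj (pp t)"
    and "rr t * (1 - t*H^2) - ss t * H^5 = - (cnj \<alpha> ^ 5 * g^5) * cnj (ss t) + Sg (w0*t*g^2) * cnj (qq t)"
    and "t^5 * rr t * H^5 + ss t * Sg (t*H^2) = - (cnj \<alpha> ^ 5 * g^5) * t^5 * cnj (rr t) + Sg (w0*t*g^2) * cnj (pp t)"
proof -
  have t0: "t \<noteq> 0" using s0 by (simp add: t_def)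
  have ct: "cnj t = t" by (simp add: t_def)
  note A = lin_eqs[OF s0, where x=0 and y=1, folded t_def, folded H_def, folded g_def]
  note B = lin_eqs[OF s0, where x=1 and y=0, folded t_def, folded H_def, folded g_def]
  show "pp t * (1 - t*H^2) - t^5 * qq t * H^5 = (1 - w0*t*g^2) * cnj (ss t) + \<alpha>^5*t^5*g^5 * cnj (qq t)"
    using A(1) by (simp add: algebra_simps)
  show "rr t * (1 - t*H^2) - ss t * H^5 = - (cnj \<alpha> ^ 5 * g^5) * cnj (ss t) + Sg (w0*t*g^2) * cnj (qq t)"
    using A(2) by (simp add: algebra_simps)
  have "t^5 * (pp t * H^5 + qq t * Sg (t*H^2)) = t^5 * ((1 - w0*t*g^2) * cnj (rr t) + \<alpha>^5 * g^5 * cnj (pp t))"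
    using B(1) ct by (simp add: algebra_simps)
  then show "pp t * H^5 + qq t * Sg (t*H^2) = (1 - w0*t*g^2) * cnj (rr t) + \<alpha>^5 * g^5 * cnj (pp t)"
    using t0 by simp
  show "t^5 * rr t * H^5 + ss t * Sg (t*H^2) = - (cnj \<alpha> ^ 5 * g^5) * t^5 * cnj (rr t) + Sg (w0*t*g^2) * cnj (pp t)"
    using B(2) ct by (simp add: algebra_simps)
qed

end


lemma Sg_expand: "Sg u = 1 + u + u^2 + u^3 + u^4"
  by (simp add: Sg_def numeral_eq_Suc lessThan_Suc)

lemma alg_main:
  fixes P Q R S t H k e :: complex
  assumes ct: "cnj t = t" and cH: "cnj H = H" and ck: "cnj k = k" and ee: "e * cnj e = 1"
  and E1: "P * (1 - t*H^2) - t^5 * Q * H^5 = (1 - t*k^2) * cnj S + e * t^5 * k^5 * cnj Q"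
  and E2: "P * H^5 + Q * Sg (t*H^2) = (1 - t*k^2) * cnj R + e * k^5 * cnj P"
  and E3: "R * (1 - t*H^2) - S * H^5 = - (cnj e * k^5) * cnj S + Sg (t*k^2) * cnj Q"
  and E4: "t^5 * R * H^5 + S * Sg (t*H^2) = - (cnj e * k^5) * t^5 * cnj R + Sg (t*k^2) * cnj P"
  defines "u \<equiv> t*H^2" and "u' \<equiv> t*k^2"
  defines "W \<equiv> 1 + u + u^2" and "W' \<equiv> 1 + u' + u'^2"
  defines "Y11 \<equiv> W' * cnj e * (P + t^3*Q*H*(1+u)) - k*(t^3*R + t*S*H*(1+u))"
  defines "Y12 \<equiv> W' * cnj e * (P*H + t^2*Q*W) - k*(t^3*R*H + S*W)"
  defines "Y21 \<equiv> - t*k*(1+u') * cnj e * (P + t^3*Q*H*(1+u)) + t^3*R + t*S*H*(1+u)"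
  defines "Y22 \<equiv> - t*k*(1+u') * cnj e * (P*H + t^2*Q*W) + t^3*R*H + S*W"
  shows "cnj Y22 = e * Y11"
    and "cnj Y21 = t * e * Y12"
    and "Y11*Y22 - Y12*Y21 = cnj e * (P*S - t^5*Q*R)"
    and "t^2 * Q = e * (- H * (Y11 + k*Y21) + Y12 + k*Y22)"
    and "t^3 * R = W*(t*k*(1+u')*Y11 + W'*Y21) - t*H*(1+u)*(t*k*(1+u')*Y12 + W'*Y22)"
proof -
  define Pb where "Pb = cnj P"
  define Qb where "Qb = cnj Q"
  define Rb where "Rb = cnj R"
  define Sb where "Sb = cnj S"
  define eb where "eb = cnj e"
  have cu: "cnj u = u" "cnj u' = u'" "cnj W = W" "cnj W' = W'"
    by (simp_all add: u_def u'_def W_def W'_def ct cH ck)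
  have c22: "cnj Y22 = - t*k*(1+u') * e * (Pb*H + t^2*Qb*W) + t^3*Rb*H + Sb*W"
    by (simp add: Y22_def cu ct cH ck Pb_def Qb_def Rb_def Sb_def)
  have c21: "cnj Y21 = - t*k*(1+u') * e * (Pb + t^3*Qb*H*(1+u)) + t^3*Rb + t*Sb*H*(1+u)"
    by (simp add: Y21_def cu ct cH ck Pb_def Qb_def Rb_def Sb_def)
  have ee': "e * eb = 1" using ee by (simp add: eb_def)
  define E1d where "E1d = P * (1 - t*H^2) - t^5 * Q * H^5 - ((1 - t*k^2) * Sb + e * t^5 * k^5 * Qb)"
  define E2d where "E2d = P * H^5 + Q * Sg (t*H^2) - ((1 - t*k^2) * Rb + e * k^5 * Pb)"
  define E3d where "E3d = R * (1 - t*H^2) - S * H^5 - (- (eb * k^5) * Sb + Sg (t*k^2) * Qb)"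
  define E4d where "E4d = t^5 * R * H^5 + S * Sg (t*H^2) - (- (eb * k^5) * t^5 * Rb + Sg (t*k^2) * Pb)"
  have Ez: "E1d = 0" "E2d = 0" "E3d = 0" "E4d = 0"
    using E1 E2 E3 E4 by (simp_all add: E1d_def E2d_def E3d_def E4d_def Pb_def Qb_def Rb_def Sb_def eb_def)
  have id1: "e * Y11 - cnj Y22 = e*(W*(W'*eb*E1d - k*t^3*E3d) + t*H*(W'*eb*t^2*E2d - k*E4d))"
    unfolding c22 Y11_def W_def W'_def u_def u'_def eb_def[symmetric] E1d_def E2d_def E3d_def E4d_def Sg_expand
    using ee' by algebra
  show "cnj Y22 = e * Y11" using id1 Ez by simp
  have id2: "t * e * Y12 - cnj Y21 = t * e*((W'*eb*E1d - k*t^3*E3d)*H*(1+u) + (W'*eb*t^2*E2d - k*E4d))"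
    unfolding c21 Y12_def W_def W'_def u_def u'_def eb_def[symmetric] E1d_def E2d_def E3d_def E4d_def Sg_expand
    using ee' by algebra
  show "cnj Y21 = t * e * Y12" using id2 Ez by simp
  show "Y11*Y22 - Y12*Y21 = cnj e * (P*S - t^5*Q*R)"
    unfolding Y11_def Y12_def Y21_def Y22_def W_def W'_def u_def u'_def eb_def[symmetric]
    by algebra
  show "t^2 * Q = e * (- H * (Y11 + k*Y21) + Y12 + k*Y22)"
    unfolding Y11_def Y12_def Y21_def Y22_def W_def W'_def u_def u'_def eb_def[symmetric]
    using ee' by algebra
  show "t^3 * R = W*(t*k*(1+u')*Y11 + W'*Y21) - t*H*(1+u)*(t*k*(1+u')*Y12 + W'*Y22)"
    unfolding Y11_def Y12_def Y21_def Y22_def W_def W'_def u_def u'_def eb_def[symmetric]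
    by algebra
qed


context conjdata
begin

definition "rho = cmod \<alpha>"
definition "ee = (\<alpha> / of_real rho)^5"
definition "Hf t = complex_of_real c0 + complex_of_real c1 * t"
definition "kf t = complex_of_real rho * (complex_of_real d0 + complex_of_real d1 * (w0 * t))"
definition "uf t = t * (Hf t)^2"
definition "vf t = t * (kf t)^2"
definition "Wf t = 1 + uf t + (uf t)^2"
definition "Vf t = 1 + vf t + (vf t)^2"
definition "Y11f t = Vf t * cnj ee * (pp t + t^3*qq t*Hf t*(1+uf t)) - kf t*(t^3*rr t + t*ss t*Hf t*(1+uf t))"
definition "Y12f t = Vf t * cnj ee * (pp t*Hf t + t^2*qq t*Wf t) - kf t*(t^3*rr t*Hf t + ss t*Wf t)"
definition "Y21f t = - t*kf t*(1+vf t) * cnj ee * (pp t + t^3*qq t*Hf t*(1+uf t)) + t^3*rr t + t*ss t*Hf t*(1+uf t)"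
definition "Y22f t = - t*kf t*(1+vf t) * cnj ee * (pp t*Hf t + t^2*qq t*Wf t) + t^3*rr t*Hf t + ss t*Wf t"

lemma rho_pos: "rho > 0" using alpha_nz by (simp add: rho_def)

lemma ee_unit: "ee * cnj ee = 1"
proof -
  have "(\<alpha> / of_real rho) * cnj (\<alpha> / of_real rho) = 1"
    using rho_pos complex_norm_square[of \<alpha>] by (simp add: rho_def field_simps power2_eq_square)
  then show ?thesis unfolding ee_def by (metis complex_cnj_power power_mult_distrib power_one)
qed

lemma w0_rho: "w0 = of_real (rho^2)" using w0_real by (simp add: rho_def)

lemma at_real:
  fixes \<sigma> :: real
  assumes s0: "\<sigma> \<noteq> 0"
  defines "t \<equiv> complex_of_real \<sigma>"
  shows "cnj (Y22f t) = ee * Y11f t"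
    and "cnj (Y21f t) = t * ee * Y12f t"
    and "Y11f t * Y22f t - Y12f t * Y21f t = cnj ee * dd t"
    and "t^2 * qq t = ee * (- Hf t * (Y11f t + kf t * Y21f t) + Y12f t + kf t * Y22f t)"
    and "t^3 * rr t = Wf t*(t*kf t*(1+vf t)*Y11f t + Vf t*Y21f t) - t*Hf t*(1+uf t)*(t*kf t*(1+vf t)*Y12f t + Vf t*Y22f t)"
proof -
  define g where "g = complex_of_real d0 + complex_of_real d1 * (w0 * t)"
  note E = E_eqs[OF s0, folded t_def, folded g_def]
  have ct: "cnj t = t" by (simp add: t_def)
  have cH: "cnj (Hf t) = Hf t" using ct by (simp add: Hf_def)
  have ck: "cnj (kf t) = kf t" using ct by (simp add: kf_def w0_rho)
  have kg: "kf t = of_real rho * g" by (simp add: kf_def g_def)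
  have r0: "complex_of_real rho \<noteq> 0" using rho_pos by simp
  have a5: "\<alpha>^5 * g^5 = ee * kf t ^ 5"
    unfolding kg ee_def using r0 by (simp add: power_mult_distrib power_divide)
  have ca5: "cnj \<alpha> ^ 5 * g^5 = cnj ee * kf t ^ 5"
    unfolding kg ee_def using r0 by (simp add: power_mult_distrib power_divide)
  have wk: "w0 * t * g^2 = t * kf t ^ 2"
    unfolding kg w0_rho by (simp add: power_mult_distrib)
  have E1: "pp t * (1 - t*Hf t^2) - t^5 * qq t * Hf t^5 = (1 - t*kf t^2) * cnj (ss t) + ee * t^5 * kf t^5 * cnj (qq t)"
    using E(1) unfolding Hf_def[symmetric] wk by (simp add: a5[symmetric] mult_ac)
  have E2: "pp t * Hf t^5 + qq t * Sg (t*Hf t^2) = (1 - t*kf t^2) * cnj (rr t) + ee * kf t^5 * cnj (pp t)"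
    using E(2) unfolding Hf_def[symmetric] wk by (simp add: a5[symmetric] mult_ac)
  have E3: "rr t * (1 - t*Hf t^2) - ss t * Hf t^5 = - (cnj ee * kf t^5) * cnj (ss t) + Sg (t*kf t^2) * cnj (qq t)"
    using E(3) unfolding Hf_def[symmetric] wk ca5 .
  have E4: "t^5 * rr t * Hf t^5 + ss t * Sg (t*Hf t^2) = - (cnj ee * kf t^5) * t^5 * cnj (rr t) + Sg (t*kf t^2) * cnj (pp t)"
    using E(4) unfolding Hf_def[symmetric] wk ca5 .
  note M = alg_main[OF ct cH ck ee_unit E1 E2 E3 E4]
  show "cnj (Y22f t) = ee * Y11f t"
    using M(1) unfolding Y22f_def Y11f_def Wf_def Vf_def uf_def vf_def .
  show "cnj (Y21f t) = t * ee * Y12f t"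
    using M(2) unfolding Y21f_def Y12f_def Wf_def Vf_def uf_def vf_def .
  show "Y11f t * Y22f t - Y12f t * Y21f t = cnj ee * dd t"
    using M(3) unfolding Y11f_def Y12f_def Y21f_def Y22f_def Wf_def Vf_def uf_def vf_def dd_def .
  show "t^2 * qq t = ee * (- Hf t * (Y11f t + kf t * Y21f t) + Y12f t + kf t * Y22f t)"
    using M(4) unfolding Y11f_def Y12f_def Y21f_def Y22f_def Wf_def Vf_def uf_def vf_def .
  show "t^3 * rr t = Wf t*(t*kf t*(1+vf t)*Y11f t + Vf t*Y21f t) - t*Hf t*(1+uf t)*(t*kf t*(1+vf t)*Y12f t + Vf t*Y22f t)"
    using M(5) unfolding Y11f_def Y12f_def Y21f_def Y22f_def Wf_def Vf_def uf_def vf_def .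
qed


lemma Yf_polyfun: "polyfun Y11f" "polyfun Y12f"
proof -
  have pH: "polyfun Hf" unfolding Hf_def[abs_def] by (intro polyfun_add polyfun_mult polyfun_const polyfun_id)
  have pk: "polyfun kf" unfolding kf_def[abs_def] by (intro polyfun_add polyfun_mult polyfun_const polyfun_id)
  have pu: "polyfun uf" unfolding uf_def[abs_def] by (intro polyfun_mult polyfun_power polyfun_id pH)
  have pv: "polyfun vf" unfolding vf_def[abs_def] by (intro polyfun_mult polyfun_power polyfun_id pk)
  have pW: "polyfun Wf" unfolding Wf_def[abs_def] by (intro polyfun_add polyfun_power polyfun_const pu)
  have pV: "polyfun Vf" unfolding Vf_def[abs_def] by (intro polyfun_add polyfun_power polyfun_const pv)
  note P = polyfuns pH pk pu pv pW pV polyfun_id polyfun_const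
  show "polyfun Y11f" unfolding Y11f_def[abs_def]
    by (intro polyfun_diff polyfun_add polyfun_mult polyfun_power P)
  show "polyfun Y12f" unfolding Y12f_def[abs_def]
    by (intro polyfun_diff polyfun_add polyfun_mult polyfun_power P)
qed

lemma norm_eq:
  fixes \<sigma> :: real
  assumes s0: "\<sigma> \<noteq> 0"
  shows "complex_of_real ((cmod (Y11f (of_real \<sigma>)))^2 - \<sigma> * (cmod (Y12f (of_real \<sigma>)))^2) = dd 0"
proof -
  define t where "t = complex_of_real \<sigma>"
  note A = at_real[OF s0, folded t_def]
  have ct: "cnj t = t" by (simp add: t_def)
  have e1: "cnj (Y11f t) = ee * Y22f t"
  proof -
    have "Y22f t = cnj ee * cnj (Y11f t)" using arg_cong[OF A(1), of cnj] by simp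
    then have "ee * Y22f t = (ee * cnj ee) * cnj (Y11f t)" by (simp only: mult_ac)
    then show ?thesis using ee_unit by simp
  qed
  have e2: "t * cnj (Y12f t) = ee * Y21f t"
  proof -
    have "Y21f t = t * cnj ee * cnj (Y12f t)" using arg_cong[OF A(2), of cnj] ct by simp
    then have "ee * Y21f t = t * (ee * cnj ee) * cnj (Y12f t)" by (simp only: mult_ac)
    then show ?thesis using ee_unit by simp
  qed
  have "Y11f t * cnj (Y11f t) - t * (Y12f t * cnj (Y12f t)) = ee * (Y11f t * Y22f t - Y12f t * Y21f t)"
    unfolding e1 mult.left_commute[of t] e2 by (simp only: right_diff_distrib mult_ac)
  also have "\<dots> = (ee * cnj ee) * dd t" using A(3) by (simp only: mult_ac)
  also have "\<dots> = dd t" using ee_unit by simp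
  also have "\<dots> = dd 0" by (rule dd_const)
  finally have fin: "Y11f t * cnj (Y11f t) - t * (Y12f t * cnj (Y12f t)) = dd 0" .
  have "complex_of_real ((cmod (Y11f t))^2 - \<sigma> * (cmod (Y12f t))^2) = Y11f t * cnj (Y11f t) - t * (Y12f t * cnj (Y12f t))"
    by (simp only: of_real_diff of_real_mult complex_norm_square t_def)
  then show ?thesis using fin by (simp only: t_def)
qed

definition "lam = Y11f 0"

lemma Y_const: "Y11f z = lam" "Y12f z = 0" and lam_nz: "lam \<noteq> 0"
  and dd0_lam: "dd 0 = of_real ((cmod lam)^2)"
proof -
  define D where "D = Re (dd 0)"
  have N: "(cmod (Y11f (of_real \<sigma>)))^2 - \<sigma> * (cmod (Y12f (of_real \<sigma>)))^2 = D" if "\<sigma> \<noteq> 0" for \<sigma>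
    using arg_cong[OF norm_eq[OF that], of Re] by (simp add: D_def)
  have B: "(cmod (Y11f (of_real \<sigma>)))^2 \<le> D \<and> (cmod (Y12f (of_real \<sigma>)))^2 \<le> D" if "\<sigma> \<le> -1" for \<sigma>
  proof -
    have "\<sigma> \<noteq> 0" using that by simp
    note n = N[OF this]
    have "0 \<le> (cmod (Y12f (of_real \<sigma>)))^2" by simp
    moreover have "0 \<le> (cmod (Y11f (of_real \<sigma>)))^2" by simp
    moreover have "(cmod (Y12f (of_real \<sigma>)))^2 \<le> - \<sigma> * (cmod (Y12f (of_real \<sigma>)))^2"
      using that mult_right_mono[of 1 "-\<sigma>" "(cmod (Y12f (of_real \<sigma>)))^2"] by simp
    ultimately show ?thesis using n by linarith
  qed
  have sq: "x \<le> 1 + D" if "0 \<le> x" "x^2 \<le> D" for x :: real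
  proof (cases "x \<le> 1")
    case False then have "x \<le> x^2" by (simp add: power2_eq_square)
    then show ?thesis using that by linarith
  next
    case True
    have "0 \<le> D" using that by (meson order_trans zero_le_power2)
    then show ?thesis using True by linarith
  qed
  have c1: "Y11f z = Y11f 0" for z
  proof (rule polyfun_bounded_const[OF Yf_polyfun(1), of "1 + D"])
    fix x :: real assume "x \<le> -1"
    then show "cmod (Y11f (of_real x)) \<le> 1 + D" using B[of x] sq[of "cmod (Y11f (of_real x))"] by simp
  qed
  have c2: "Y12f z = Y12f 0" for z
  proof (rule polyfun_bounded_const[OF Yf_polyfun(2), of "1 + D"])
    fix x :: real assume "x \<le> -1"
    then show "cmod (Y12f (of_real x)) \<le> 1 + D" using B[of x] sq[of "cmod (Y12f (of_real x))"] by simp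
  qed
  have n1: "(cmod lam)^2 + (cmod (Y12f 0))^2 = D"
    using N[of "-1"] c1[of "of_real (-1)"] c2[of "of_real (-1)"] by (simp only: lam_def) simp
  have n2: "(cmod lam)^2 + 2 * (cmod (Y12f 0))^2 = D"
    using N[of "-2"] c1[of "of_real (-2)"] c2[of "of_real (-2)"] by (simp only: lam_def) simp
  have "(cmod (Y12f 0))^2 = 0" using n1 n2 by linarith
  then have y0: "Y12f 0 = 0" by simp
  show "Y11f z = lam" using c1[of z] by (simp only: lam_def)
  show "Y12f z = 0" using c2[of z] y0 by simp
  have x: "(cmod (Y11f (of_real (-1))))^2 - (-1) * (cmod (Y12f (of_real (-1))))^2 = D" by (rule N) simp
  have "complex_of_real ((cmod (Y11f (of_real (-1))))^2 - (-1) * (cmod (Y12f (of_real (-1))))^2) = dd 0"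
    by (rule norm_eq) simp
  then have "dd 0 = of_real D" by (simp only: x)
  then show dl: "dd 0 = of_real ((cmod lam)^2)" using n1 y0 by simp
  show "lam \<noteq> 0" using dl dd0_nz by auto
qed

definition "lam2 = cnj ee * cnj lam"

lemma Y2_vals:
  fixes \<sigma> :: real
  assumes s0: "\<sigma> \<noteq> 0"
  shows "Y21f (of_real \<sigma>) = 0" "Y22f (of_real \<sigma>) = lam2"
proof -
  note A = at_real[OF s0]
  have "cnj (Y21f (of_real \<sigma>)) = 0" using A(2) Y_const by simp
  then show "Y21f (of_real \<sigma>) = 0" by simp
  have "Y22f (of_real \<sigma>) = cnj (ee * Y11f (of_real \<sigma>))" using arg_cong[OF A(1), of cnj] by simp
  then show "Y22f (of_real \<sigma>) = lam2" using Y_const by (simp add: lam2_def)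
qed

lemma lam2_nz: "lam2 \<noteq> 0" using lam_nz ee_unit by (auto simp: lam2_def)

end


context conjdata
begin

definition "k0 = complex_of_real (rho * d0)"
definition "k1 = complex_of_real (rho^3 * d1)"

lemma kf_lin: "kf t = k0 + k1 * t"
  unfolding kf_def k0_def k1_def w0_rho by (simp add: algebra_simps power2_eq_square power3_eq_cube)

lemma Hf_lin: "Hf t = complex_of_real c0 + complex_of_real c1 * t" by (simp add: Hf_def)

lemma pHk: "polyfun Hf" "polyfun kf"
  unfolding Hf_def[abs_def] kf_def[abs_def] by (intro polyfun_add polyfun_mult polyfun_const polyfun_id)+

lemma ee_nz: "ee \<noteq> 0" using ee_unit by auto

lemma Q_rel: "z^2 * qq z = ee * (kf z * lam2 - Hf z * lam)"
proof (rule polyfun_eq_reals[of "\<lambda>z. z^2 * qq z" "\<lambda>z. ee * (kf z * lam2 - Hf z * lam)"])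
  show "polyfun (\<lambda>z. z^2 * qq z)" by (intro polyfun_mult polyfun_power polyfun_id polyfuns)
  show "polyfun (\<lambda>z. ee * (kf z * lam2 - Hf z * lam))"
    by (intro polyfun_mult polyfun_diff polyfun_const pHk)
  fix x :: real assume x: "x \<noteq> 0"
  show "(of_real x)^2 * qq (of_real x) = ee * (kf (of_real x) * lam2 - Hf (of_real x) * lam)"
    using at_real(4)[OF x] Y2_vals[OF x] Y_const by (simp add: algebra_simps)
qed

lemma q_cond0: "k0 * lam2 = complex_of_real c0 * lam"
  using Q_rel[of 0] ee_nz by (simp add: kf_lin Hf_lin)

lemma Q_rel2: "z * qq z = ee * (k1 * lam2 - complex_of_real c1 * lam)"
proof (rule polyfun_eq_reals[of "\<lambda>z. z * qq z" "\<lambda>z. ee * (k1 * lam2 - complex_of_real c1 * lam)"])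
  show "polyfun (\<lambda>z. z * qq z)" by (intro polyfun_mult polyfun_id polyfuns)
  show "polyfun (\<lambda>z. ee * (k1 * lam2 - complex_of_real c1 * lam))" by (rule polyfun_const)
  fix x :: real assume x: "x \<noteq> 0"
  define t where "t = complex_of_real x"
  have t0: "t \<noteq> 0" using x by (simp add: t_def)
  have "t * (t * qq t) = t * (ee * (k1 * lam2 - complex_of_real c1 * lam))"
    using Q_rel[of t] q_cond0 unfolding kf_lin Hf_lin by (simp add: algebra_simps power2_eq_square)
  then show "(of_real x) * qq (of_real x) = ee * (k1 * lam2 - complex_of_real c1 * lam)"
    using t0 by (simp add: t_def)
qed

lemma q_cond1: "k1 * lam2 = complex_of_real c1 * lam"
  using Q_rel2[of 0] ee_nz by simp

definition "Ff t = kf t * (1 + vf t) * Wf t * lam - Hf t * (1 + uf t) * Vf t * lam2"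

lemma pF: "polyfun Ff"
proof -
  have pu: "polyfun uf" unfolding uf_def[abs_def] by (intro polyfun_mult polyfun_power polyfun_id pHk)
  have pv: "polyfun vf" unfolding vf_def[abs_def] by (intro polyfun_mult polyfun_power polyfun_id pHk)
  have pW: "polyfun Wf" unfolding Wf_def[abs_def] by (intro polyfun_add polyfun_power polyfun_const pu)
  have pV: "polyfun Vf" unfolding Vf_def[abs_def] by (intro polyfun_add polyfun_power polyfun_const pv)
  show ?thesis unfolding Ff_def[abs_def]
    by (intro polyfun_diff polyfun_mult polyfun_add polyfun_const pHk pu pv pW pV)
qed

lemma R_rel: "z^2 * rr z = Ff z"
proof (rule polyfun_eq_reals[of "\<lambda>z. z^2 * rr z" Ff])
  show "polyfun (\<lambda>z. z^2 * rr z)" by (intro polyfun_mult polyfun_power polyfun_id polyfuns)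
  show "polyfun Ff" by (rule pF)
  fix x :: real assume x: "x \<noteq> 0"
  define t where "t = complex_of_real x"
  have t0: "t \<noteq> 0" using x by (simp add: t_def)
  have "t * (t^2 * rr t) = t * Ff t"
    using at_real(5)[OF x, folded t_def] Y2_vals[OF x, folded t_def] Y_const
    unfolding Ff_def by (simp add: algebra_simps power2_eq_square power3_eq_cube)
  then show "(of_real x)^2 * rr (of_real x) = Ff (of_real x)"
    using t0 by (simp add: t_def)
qed

lemma r_cond0: "k0 * lam = complex_of_real c0 * lam2"
  using R_rel[of 0] by (simp add: Ff_def kf_lin Hf_lin uf_def vf_def Wf_def Vf_def)

definition "Df t = ((Hf t)^2 - (kf t)^2) * ((Hf t)^2 + (kf t)^2 + t * (Hf t)^2 * (kf t)^2)"

lemma F_decomp: "Ff t = k0 * lam * t^2 * Df t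
    + t * (k1 * (1 + vf t) * Wf t * lam - complex_of_real c1 * (1 + uf t) * Vf t * lam2)
    + (k0 * lam - complex_of_real c0 * lam2) * ((1 + uf t) * Vf t)"
  unfolding Ff_def Df_def kf_lin Hf_lin uf_def vf_def Wf_def Vf_def by algebra

lemma R_rel2: "z * rr z - k0 * lam * z * Df z =
    k1 * (1 + vf z) * Wf z * lam - complex_of_real c1 * (1 + uf z) * Vf z * lam2"
proof (rule polyfun_eq_reals[of "\<lambda>z. z * rr z - k0 * lam * z * Df z"
      "\<lambda>z. k1 * (1 + vf z) * Wf z * lam - complex_of_real c1 * (1 + uf z) * Vf z * lam2"])
  have pu: "polyfun uf" unfolding uf_def[abs_def] by (intro polyfun_mult polyfun_power polyfun_id pHk)
  have pv: "polyfun vf" unfolding vf_def[abs_def] by (intro polyfun_mult polyfun_power polyfun_id pHk)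
  have pW: "polyfun Wf" unfolding Wf_def[abs_def] by (intro polyfun_add polyfun_power polyfun_const pu)
  have pV: "polyfun Vf" unfolding Vf_def[abs_def] by (intro polyfun_add polyfun_power polyfun_const pv)
  have pD: "polyfun Df" unfolding Df_def[abs_def]
    by (intro polyfun_mult polyfun_add polyfun_diff polyfun_power polyfun_id pHk)
  show "polyfun (\<lambda>z. z * rr z - k0 * lam * z * Df z)"
    by (intro polyfun_diff polyfun_mult polyfun_id polyfun_const polyfuns pD)
  show "polyfun (\<lambda>z. k1 * (1 + vf z) * Wf z * lam - complex_of_real c1 * (1 + uf z) * Vf z * lam2)"
    by (intro polyfun_diff polyfun_mult polyfun_add polyfun_const pu pv pW pV)
  fix x :: real assume x: "x \<noteq> 0"
  define t where "t = complex_of_real x"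
  have t0: "t \<noteq> 0" using x by (simp add: t_def)
  have "t * (t * rr t - k0 * lam * t * Df t) =
      t * (k1 * (1 + vf t) * Wf t * lam - complex_of_real c1 * (1 + uf t) * Vf t * lam2)"
    using R_rel[of t] F_decomp[of t] r_cond0 by (simp add: algebra_simps power2_eq_square)
  then show "of_real x * rr (of_real x) - k0 * lam * of_real x * Df (of_real x) =
      k1 * (1 + vf (of_real x)) * Wf (of_real x) * lam - complex_of_real c1 * (1 + uf (of_real x)) * Vf (of_real x) * lam2"
    using t0 by (simp add: t_def)
qed

lemma r_cond1: "k1 * lam = complex_of_real c1 * lam2"
  using R_rel2[of 0] by (simp add: uf_def vf_def Wf_def Vf_def)

lemma sign_concl: "\<exists>s::real. (s = 1 \<or> s = -1) \<and> rho * d0 = s * c0 \<and> rho^3 * d1 = s * c1"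
proof (cases "lam2 = lam")
  case True
  have "k0 = complex_of_real c0" using q_cond0 True lam_nz by simp
  then have a: "rho * d0 = c0" unfolding k0_def by (simp only: of_real_eq_iff)
  have "k1 = complex_of_real c1" using q_cond1 True lam_nz by simp
  then have b: "rho^3 * d1 = c1" unfolding k1_def by (simp only: of_real_eq_iff)
  show ?thesis by (intro exI[of _ 1]) (simp add: a b)
next
  case False
  have "(k0 + complex_of_real c0) * (lam2 - lam) = 0"
    using q_cond0 r_cond0 by (simp add: algebra_simps)
  then have "k0 = - complex_of_real c0" using False by (simp add: add_eq_0_iff2)
  moreover have "(k1 + complex_of_real c1) * (lam2 - lam) = 0"
    using q_cond1 r_cond1 by (simp add: algebra_simps)
  then have "k1 = - complex_of_real c1" using False by (simp add: add_eq_0_iff2)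
  ultimately have "complex_of_real (rho * d0) = complex_of_real (- c0)"
     "complex_of_real (rho^3 * d1) = complex_of_real (- c1)"
    unfolding k0_def k1_def by simp_all
  then have a: "rho * d0 = - c0" "rho^3 * d1 = - c1" by (simp_all only: of_real_eq_iff)
  show ?thesis by (intro exI[of _ "-1"]) (simp add: a)
qed

lemma kappa_concl: "\<exists>\<kappa>::real. \<kappa> \<noteq> 0 \<and> d0 = \<kappa> * c0 \<and> d1 = \<kappa>^3 * c1"
proof -
  obtain s :: real where s: "s = 1 \<or> s = -1" "rho * d0 = s * c0" "rho^3 * d1 = s * c1"
    using sign_concl by blast
  have r: "rho > 0" by (rule rho_pos)
  have s3: "s^3 = s" using s(1) by auto
  show ?thesis
  proof (intro exI[of _ "s / rho"] conjI)
    show "s / rho \<noteq> 0" using s(1) r by auto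
    show "d0 = s / rho * c0" using s(2) r by (simp add: field_simps)
    have e1: "(s / rho)^3 * c1 = s * c1 / rho^3" using s3 by (simp add: power_divide)
    have e2: "d1 = s * c1 / rho^3" using s(3) r by (simp add: field_simps)
    show "d1 = (s / rho)^3 * c1" by (simp only: e1 e2)
  qed
qed

end


lemma cnj_Sg: "cnj (Sg z) = Sg (cnj z)"
  by (simp add: Sg_expand)

lemma invol_core1:
  fixes a b x y H :: complex
  shows "(1 - a*b*H^2) * (- (a^5*H^5) * y + Sg (a*b*H^2) * x) + a^5*H^5*((1 - a*b*H^2)*y + b^5*H^5*x) = x"
proof -
  define u where "u = a*b*H^2"
  have u5: "a^5*b^5*H^10 = u^5" by (simp add: u_def power_mult_distrib power_mult[symmetric])
  have "(1 - u) * (- (a^5*H^5) * y + (1 + u + u^2 + u^3 + u^4) * x) + a^5*H^5*((1 - u)*y + b^5*H^5*x)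
      = ((1 - u) * (1 + u + u^2 + u^3 + u^4) + a^5*b^5*H^10) * x"
    by (simp add: algebra_simps power_add[symmetric])
  also have "\<dots> = x" unfolding u5 by (simp add: algebra_simps eval_nat_numeral)
  finally show ?thesis by (simp add: u_def Sg_expand)
qed

lemma invol_core2:
  fixes a b x y H :: complex
  shows "- (b^5*H^5) * (- (a^5*H^5) * y + Sg (a*b*H^2) * x) + Sg (a*b*H^2) * ((1 - a*b*H^2)*y + b^5*H^5*x) = y"
proof -
  define u where "u = a*b*H^2"
  have u5: "a^5*b^5*H^10 = u^5" by (simp add: u_def power_mult_distrib power_mult[symmetric])
  have "- (b^5*H^5) * (- (a^5*H^5) * y + (1 + u + u^2 + u^3 + u^4) * x) + (1 + u + u^2 + u^3 + u^4) * ((1 - u)*y + b^5*H^5*x)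
      = ((1 - u) * (1 + u + u^2 + u^3 + u^4) + a^5*b^5*H^10) * y"
    by (simp add: algebra_simps power_add[symmetric])
  also have "\<dots> = y" unfolding u5 by (simp add: algebra_simps eval_nat_numeral)
  finally show ?thesis by (simp add: u_def Sg_expand)
qed

lemma mu_lin_comp: "mu_lin c0 c1 (a,b,x,y) =
   (cnj b, cnj a,
    cnj ((1 - (a*b) * (of_real c0 + of_real c1 * (a*b))^2) * y + b^5 * (of_real c0 + of_real c1 * (a*b))^5 * x),
    cnj (- (a^5 * (of_real c0 + of_real c1 * (a*b))^5) * y + Sg ((a*b) * (of_real c0 + of_real c1 * (a*b))^2) * x))"
  by (simp add: mu_lin_eval2 Let_def cnj_Sg mult.commute)

lemma mu_lin_invol: "mu_lin c0 c1 (mu_lin c0 c1 p) = p"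
proof -
  obtain a b x y where p: "p = (a,b,x,y)" by (cases p) auto
  define H where "H = complex_of_real c0 + complex_of_real c1 * (a*b)"
  define M1 where "M1 = (1 - (a*b) * H^2) * y + b^5 * H^5 * x"
  define M2 where "M2 = - (a^5 * H^5) * y + Sg ((a*b) * H^2) * x"
  have s1: "mu_lin c0 c1 (a,b,x,y) = (cnj b, cnj a, cnj M1, cnj M2)"
    unfolding mu_lin_comp M1_def M2_def H_def ..
  have HH: "complex_of_real c0 + complex_of_real c1 * (cnj (cnj a) * cnj (cnj b)) = H" by (simp add: H_def)
  have s2: "mu_lin c0 c1 (cnj b, cnj a, cnj M1, cnj M2) =
     (a, b, (1 - a*b*H^2) * M2 + a^5 * H^5 * M1, - (b^5 * H^5) * M2 + Sg (a*b*H^2) * M1)"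
    by (simp only: mu_lin_eval2 Let_def complex_cnj_cnj HH H_def[symmetric])
  have "mu_lin c0 c1 (mu_lin c0 c1 (a,b,x,y)) =
     (a, b, (1 - a*b*H^2) * M2 + a^5 * H^5 * M1, - (b^5 * H^5) * M2 + Sg (a*b*H^2) * M1)"
    by (simp only: s1 s2)
  also have "\<dots> = (a,b,x,y)"
    using invol_core1[where a=a and b=b and x=x and y=y and H=H] invol_core2[where a=a and b=b and x=x and y=y and H=H] by (simp only: M1_def M2_def)
  finally show ?thesis by (simp only: p)
qed

lemma mu_lin_sigma:
  assumes t0: "t \<noteq> 0"
  shows "mu_lin c0 c1 (act t p) = act (sigma t) (mu_lin c0 c1 p)"
proof -
  obtain a b x y where p: "p = (a,b,x,y)" by (cases p) auto
  have ct0: "cnj t \<noteq> 0" using t0 by simp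
  have T: "cnj (inverse t ^ 2 * b) * cnj (t^2 * a) = cnj b * cnj a"
    using ct0 by (simp add: field_simps)
  show ?thesis
    unfolding p act_simp mu_lin_eval2 Let_def T
    using ct0 by (simp add: sigma_def field_simps)
qed

lemma poly4_conj_mu: "regular_map (conj_pt \<circ> mu_lin c0 c1)"
proof -
  define A where "A = (\<lambda>p::pt. fst p)"
  define B where "B = (\<lambda>p::pt. fst (snd p))"
  define X where "X = (\<lambda>p::pt. fst (snd (snd p)))"
  define Y where "Y = (\<lambda>p::pt. snd (snd (snd p)))"
  define h where "h = (\<lambda>p. complex_of_real c0 + complex_of_real c1 * (A p * B p))"
  have eq: "(conj_pt \<circ> mu_lin c0 c1) p =
     (B p, A p, (1 - (A p * B p) * h p ^2) * Y p + B p ^5 * h p ^5 * X p,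
      - (A p ^5 * h p ^5) * Y p + (1 + (A p * B p) * h p ^2 + ((A p * B p) * h p ^2)^2 + ((A p * B p) * h p ^2)^3
        + ((A p * B p) * h p ^2)^4) * X p)" for p
    by (cases p) (simp add: mu_lin_comp conj_pt_def A_def B_def X_def Y_def h_def Sg_expand)
  have pA: "poly4 A" unfolding A_def by (rule poly4_a)
  have pB: "poly4 B" unfolding B_def by (rule poly4_b)
  have pX: "poly4 X" unfolding X_def by (rule poly4_x)
  have pY: "poly4 Y" unfolding Y_def by (rule poly4_y)
  have ph: "poly4 h" unfolding h_def by (intro poly4_add poly4_mult poly4_const pA pB)
  note P = pA pB pX pY ph poly4_const
  show ?thesis unfolding regular_map_def eq fst_conv snd_conv
    by (intro conjI poly4_add poly4_mult poly4_diff poly4_minus poly4_power P)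
qed

lemma rcf_mu_lin: "real_circle_form (mu_lin c0 c1)"
  unfolding real_circle_form_def antiregular_map_def
  using poly4_conj_mu mu_lin_invol mu_lin_sigma by (auto simp: fun_eq_iff)


lemma conj_scaled:
  fixes r s :: real and \<gamma> :: complex
  assumes sg: "(s = 1 \<and> \<gamma> = 1) \<or> (s = -1 \<and> \<gamma> = \<i>)"
    and hd: "\<And>z. complex_of_real r * (of_real d0 + of_real d1 * (of_real r * of_real r * z)) = of_real s * (of_real c0 + of_real c1 * z)"
  shows "mu_lin d0 d1 (of_real r * a, of_real r * b, \<gamma> * x, cnj \<gamma> * y) =
    (of_real r * cnj b, of_real r * cnj a, \<gamma> * fst (snd (snd (mu_lin c0 c1 (a,b,x,y)))),
       cnj \<gamma> * snd (snd (snd (mu_lin c0 c1 (a,b,x,y)))))"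
proof -
  define A where "A = cnj a"
  define B where "B = cnj b"
  define h where "h = complex_of_real c0 + complex_of_real c1 * (B * A)"
  define h' where "h' = complex_of_real d0 + complex_of_real d1 * (cnj (of_real r * b) * cnj (of_real r * a))"
  have T': "cnj (of_real r * b) * cnj (of_real r * a) = of_real r * of_real r * (B * A)"
    by (simp add: A_def B_def mult_ac)
  have rh: "of_real r * h' = of_real s * h" unfolding h'_def T' h_def by (rule hd)
  have s2: "(complex_of_real s)^2 = 1" using sg by auto
  have s5: "(complex_of_real s)^5 = of_real s" using sg by auto
  have e1: "cnj (of_real r * b) * cnj (of_real r * a) * h'^2 = B * A * h^2"
  proof -
    have "cnj (of_real r * b) * cnj (of_real r * a) * h'^2 = B * A * (of_real r * h')^2"
      unfolding T' by (simp add: power_mult_distrib mult_ac power2_eq_square)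
    also have "\<dots> = B * A * h^2" unfolding rh by (simp add: power_mult_distrib s2)
    finally show ?thesis .
  qed
  have e2: "cnj (of_real r * b) ^ 5 * h'^5 = of_real s * (B^5 * h^5)"
  proof -
    have "cnj (of_real r * b) ^ 5 * h'^5 = B^5 * (of_real r * h')^5"
      by (simp add: B_def power_mult_distrib mult_ac)
    also have "\<dots> = of_real s * (B^5 * h^5)" unfolding rh by (simp add: power_mult_distrib s5 mult_ac)
    finally show ?thesis .
  qed
  have e3: "cnj (of_real r * a) ^ 5 * h'^5 = of_real s * (A^5 * h^5)"
  proof -
    have "cnj (of_real r * a) ^ 5 * h'^5 = A^5 * (of_real r * h')^5"
      by (simp add: A_def power_mult_distrib mult_ac)
    also have "\<dots> = of_real s * (A^5 * h^5)" unfolding rh by (simp add: power_mult_distrib s5 mult_ac)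
    finally show ?thesis .
  qed
  have L: "mu_lin d0 d1 (of_real r * a, of_real r * b, \<gamma> * x, cnj \<gamma> * y) =
     (of_real r * B, of_real r * A,
      (1 - B * A * h^2) * (\<gamma> * cnj y) + of_real s * (B^5 * h^5) * (cnj \<gamma> * cnj x),
      - (of_real s * (A^5 * h^5)) * (\<gamma> * cnj y) + Sg (B * A * h^2) * (cnj \<gamma> * cnj x))"
  proof -
    have e1': "of_real r * cnj b * (of_real r * cnj a) * h'^2 = B * A * h^2" using e1 by simp
    have e2': "(of_real r * cnj b) ^ 5 * h'^5 = of_real s * (B^5 * h^5)" using e2 by simp
    have e3': "(of_real r * cnj a) ^ 5 * h'^5 = of_real s * (A^5 * h^5)" using e3 by simp
    show ?thesis
      unfolding mu_lin_eval2 Let_def h'_def[symmetric]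
      by (simp only: complex_cnj_mult complex_cnj_cnj complex_cnj_complex_of_real e1' e2' e3' A_def B_def)
  qed
  have R: "mu_lin c0 c1 (a,b,x,y) =
     (B, A, (1 - B * A * h^2) * cnj y + B^5 * h^5 * cnj x, - (A^5 * h^5) * cnj y + Sg (B * A * h^2) * cnj x)"
    unfolding mu_lin_eval2 Let_def h_def A_def B_def ..
  show ?thesis unfolding L R using sg by (auto simp: algebra_simps A_def B_def)
qed

lemma construct:
  fixes \<kappa> :: real
  assumes k0: "\<kappa> \<noteq> 0" and d0: "d0 = \<kappa> * c0" and d1: "d1 = \<kappa>^3 * c1"
  shows "equivalent_rcf (mu_lin c0 c1) (mu_lin d0 d1)"
proof -
  define r where "r = 1 / \<bar>\<kappa>\<bar>"
  define s :: real where "s = (if \<kappa> > 0 then 1 else -1)"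
  define \<gamma> :: complex where "\<gamma> = (if \<kappa> > 0 then 1 else \<i>)"
  have r0: "r > 0" using k0 by (simp add: r_def)
  have sg: "(s = 1 \<and> \<gamma> = 1) \<or> (s = -1 \<and> \<gamma> = \<i>)" by (simp add: s_def \<gamma>_def)
  have rk: "r * \<kappa> = s" using k0 by (auto simp: r_def s_def)
  have s3: "s^3 = s" using sg by auto
  have hd: "complex_of_real r * (of_real d0 + of_real d1 * (of_real r * of_real r * z)) = of_real s * (of_real c0 + of_real c1 * z)" for z
  proof -
    have "complex_of_real r * (of_real d0 + of_real d1 * (of_real r * of_real r * z)) =
        of_real (r * \<kappa>) * of_real c0 + of_real ((r * \<kappa>)^3) * of_real c1 * z"
      unfolding d0 d1 by (simp add: algebra_simps power3_eq_cube)
    also have "\<dots> = of_real s * (of_real c0 + of_real c1 * z)" unfolding rk s3 by (simp add: algebra_simps)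
    finally show ?thesis .
  qed
  have gg: "\<gamma> * cnj \<gamma> = 1" using sg by auto
  define \<psi> :: "pt \<Rightarrow> pt" where "\<psi> p = (of_real r * fst p, of_real r * fst (snd p), \<gamma> * fst (snd (snd p)), cnj \<gamma> * snd (snd (snd p)))" for p
  define \<phi> :: "pt \<Rightarrow> pt" where "\<phi> p = (fst p / of_real r, fst (snd p) / of_real r, cnj \<gamma> * fst (snd (snd p)), \<gamma> * snd (snd (snd p)))" for p
  have pp: "\<phi> (\<psi> p) = p" for p using r0 gg by (cases p) (simp add: \<phi>_def \<psi>_def mult.assoc[symmetric] mult.commute[of "cnj \<gamma>"])
  have qq: "\<psi> (\<phi> p) = p" for p using r0 gg by (cases p) (simp add: \<phi>_def \<psi>_def mult.assoc[symmetric] mult.commute[of "cnj \<gamma>"])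
  have c1: "\<phi> \<circ> \<psi> = id" and c2: "\<psi> \<circ> \<phi> = id" using pp qq by (auto simp: fun_eq_iff)
  have bij: "bij \<psi>" by (rule o_bij[OF c1 c2])
  have inv: "inv \<psi> = \<phi>" by (rule inv_unique_comp[OF c2 c1])
  have reg\<psi>: "regular_map \<psi>"
    unfolding regular_map_def \<psi>_def fst_conv snd_conv
    by (intro conjI poly4_mult poly4_const poly4_a poly4_b poly4_x poly4_y)
  have reg\<phi>: "regular_map \<phi>"
  proof -
    have e: "(\<lambda>p::pt. fst p / complex_of_real r) = (\<lambda>p. inverse (of_real r) * fst p)"
         "(\<lambda>p::pt. fst (snd p) / complex_of_real r) = (\<lambda>p. inverse (of_real r) * fst (snd p))"
      by (auto simp: field_simps)
    show ?thesis
      unfolding regular_map_def \<phi>_def fst_conv snd_conv e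
      by (intro conjI poly4_mult poly4_const poly4_a poly4_b poly4_x poly4_y)
  qed
  have eqv: "equivariant \<psi>"
    unfolding equivariant_def
  proof (intro allI impI)
    fix t p assume "(t::complex) \<noteq> 0"
    show "\<psi> (act t p) = act t (\<psi> p)" by (cases p) (simp add: \<psi>_def act_def mult_ac)
  qed
  have cj: "mu_lin d0 d1 (\<psi> p) = \<psi> (mu_lin c0 c1 p)" for p
  proof -
    obtain a b x y where p: "p = (a,b,x,y)" by (cases p) auto
    have m1: "fst (mu_lin c0 c1 (a,b,x,y)) = cnj b" and m2: "fst (snd (mu_lin c0 c1 (a,b,x,y))) = cnj a"
      by (simp_all add: mu_lin_eval2 Let_def)
    show ?thesis unfolding p \<psi>_def fst_conv snd_conv conj_scaled[OF sg hd]
      by (simp only: m1 m2)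
  qed
  have eqd: "mu_lin d0 d1 = \<psi> \<circ> mu_lin c0 c1 \<circ> inv \<psi>"
  proof
    fix q
    have "mu_lin d0 d1 q = mu_lin d0 d1 (\<psi> (\<phi> q))" using qq by simp
    also have "\<dots> = (\<psi> \<circ> mu_lin c0 c1 \<circ> inv \<psi>) q" by (simp add: cj inv)
    finally show "mu_lin d0 d1 q = (\<psi> \<circ> mu_lin c0 c1 \<circ> inv \<psi>) q" .
  qed
  show ?thesis
    unfolding equivalent_rcf_def regular_aut_def
  proof (intro conjI rcf_mu_lin exI[of _ \<psi>])
    show "bij \<psi>" by (rule bij)
    show "regular_map \<psi>" by (rule reg\<psi>)
    show "regular_map (inv \<psi>)" unfolding inv by (rule reg\<phi>)
    show "equivariant \<psi>" by (rule eqv)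
    show "mu_lin d0 d1 = \<psi> \<circ> mu_lin c0 c1 \<circ> inv \<psi>" by (rule eqd)
  qed
qed


lemma equiv_iff_kappa:
  "equivalent_rcf (mu_lin c0 c1) (mu_lin d0 d1) \<longleftrightarrow> (\<exists>\<kappa>::real. \<kappa> \<noteq> 0 \<and> d0 = \<kappa> * c0 \<and> d1 = \<kappa>^3 * c1)"
proof
  assume "equivalent_rcf (mu_lin c0 c1) (mu_lin d0 d1)"
  then obtain \<psi> where ra: "regular_aut \<psi>" and eq: "equivariant \<psi>"
    and m: "mu_lin d0 d1 = \<psi> \<circ> mu_lin c0 c1 \<circ> inv \<psi>"
    unfolding equivalent_rcf_def by blast
  have bij: "bij \<psi>" and r1: "regular_map \<psi>" and r2: "regular_map (inv \<psi>)"
    using ra unfolding regular_aut_def by auto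
  have i1: "inv \<psi> (\<psi> p) = p" for p using bij by (simp add: bij_def inv_f_f)
  have i2: "\<psi> (inv \<psi> p) = p" for p using bij by (simp add: bij_def surj_f_inv_f)
  have eq2: "equivariant (inv \<psi>)"
    unfolding equivariant_def
  proof (intro allI impI)
    fix t p assume t: "(t::complex) \<noteq> 0"
    have "\<psi> (act t (inv \<psi> p)) = act t p"
      using eq t i2[of p] unfolding equivariant_def by metis
    then have "inv \<psi> (\<psi> (act t (inv \<psi> p))) = inv \<psi> (act t p)" by simp
    then show "inv \<psi> (act t p) = act t (inv \<psi> p)" using i1 by simp
  qed
  have cj: "mu_lin d0 d1 (\<psi> p) = \<psi> (mu_lin c0 c1 p)" for p
    using m i1 by simp
  interpret conjdata c0 c1 d0 d1 \<psi> "inv \<psi>"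
    by unfold_locales (use r1 r2 eq eq2 i1 cj in auto)
  show "\<exists>\<kappa>::real. \<kappa> \<noteq> 0 \<and> d0 = \<kappa> * c0 \<and> d1 = \<kappa>^3 * c1" by (rule kappa_concl)
next
  assume "\<exists>\<kappa>::real. \<kappa> \<noteq> 0 \<and> d0 = \<kappa> * c0 \<and> d1 = \<kappa>^3 * c1"
  then obtain \<kappa> :: real where "\<kappa> \<noteq> 0" "d0 = \<kappa> * c0" "d1 = \<kappa>^3 * c1" by blast
  then show "equivalent_rcf (mu_lin c0 c1) (mu_lin d0 d1)" by (rule construct)
qed

lemma kappa_iff_disj:
  fixes c0 c1 d0 d1 :: real
  shows "(\<exists>\<kappa>::real. \<kappa> \<noteq> 0 \<and> d0 = \<kappa> * c0 \<and> d1 = \<kappa>^3 * c1) \<longleftrightarrow>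
           (c0 = 0 \<and> d0 = 0 \<and> c1 = 0 \<and> d1 = 0) \<or>
           (c0 = 0 \<and> d0 = 0 \<and> c1 * d1 \<noteq> 0) \<or>
           (c1 = 0 \<and> d1 = 0 \<and> c0 * d0 \<noteq> 0) \<or>
           (c0 * d0 * c1 * d1 \<noteq> 0 \<and> (d0 / c0) ^ 3 = d1 / c1)"
proof
  assume "\<exists>\<kappa>::real. \<kappa> \<noteq> 0 \<and> d0 = \<kappa> * c0 \<and> d1 = \<kappa>^3 * c1"
  then obtain \<kappa> :: real where k: "\<kappa> \<noteq> 0" "d0 = \<kappa> * c0" "d1 = \<kappa>^3 * c1" by blast
  show "(c0 = 0 \<and> d0 = 0 \<and> c1 = 0 \<and> d1 = 0) \<or>
           (c0 = 0 \<and> d0 = 0 \<and> c1 * d1 \<noteq> 0) \<or>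
           (c1 = 0 \<and> d1 = 0 \<and> c0 * d0 \<noteq> 0) \<or>
           (c0 * d0 * c1 * d1 \<noteq> 0 \<and> (d0 / c0) ^ 3 = d1 / c1)"
  proof (cases "c0 = 0"; cases "c1 = 0")
    assume "c0 \<noteq> 0" "c1 \<noteq> 0"
    then have "(d0 / c0) ^ 3 = d1 / c1" using k by (simp add: power_mult_distrib)
    then show ?thesis using k \<open>c0 \<noteq> 0\<close> \<open>c1 \<noteq> 0\<close> by auto
  qed (use k in auto)
next
  assume D: "(c0 = 0 \<and> d0 = 0 \<and> c1 = 0 \<and> d1 = 0) \<or>
           (c0 = 0 \<and> d0 = 0 \<and> c1 * d1 \<noteq> 0) \<or>
           (c1 = 0 \<and> d1 = 0 \<and> c0 * d0 \<noteq> 0) \<or>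
           (c0 * d0 * c1 * d1 \<noteq> 0 \<and> (d0 / c0) ^ 3 = d1 / c1)"
  show "\<exists>\<kappa>::real. \<kappa> \<noteq> 0 \<and> d0 = \<kappa> * c0 \<and> d1 = \<kappa>^3 * c1"
  proof -
    consider "c0 = 0 \<and> d0 = 0 \<and> c1 = 0 \<and> d1 = 0" | "c0 = 0 \<and> d0 = 0 \<and> c1 * d1 \<noteq> 0"
      | "c1 = 0 \<and> d1 = 0 \<and> c0 * d0 \<noteq> 0" | "c0 * d0 * c1 * d1 \<noteq> 0 \<and> (d0 / c0) ^ 3 = d1 / c1"
      using D by blast
    then show ?thesis
    proof cases
      case 1 then show ?thesis by (intro exI[of _ 1]) simp
    next
      case 2
      define \<kappa> where "\<kappa> = root 3 (d1 / c1)"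
      have k3: "\<kappa>^3 = d1 / c1" unfolding \<kappa>_def by (rule odd_real_root_pow) simp
      have "\<kappa> \<noteq> 0" using 2 k3 by auto
      moreover have "d1 = \<kappa>^3 * c1" using 2 k3 by simp
      ultimately show ?thesis using 2 by (intro exI[of _ \<kappa>]) simp
    next
      case 3 then show ?thesis by (intro exI[of _ "d0 / c0"]) simp
    next
      case 4
      then have "d1 = (d0 / c0)^3 * c1" by simp
      then show ?thesis using 4 by (intro exI[of _ "d0 / c0"]) simp
    qed
  qed
qed

theorem mainTheorem3:
  fixes c0 c1 c0' c1' :: real
  shows "(equivalent_rcf (mu_lin c0 c1) (mu_lin c0' c1') \<longleftrightarrow>
           (c0 = 0 \<and> c0' = 0 \<and> c1 = 0 \<and> c1' = 0) \<or>
           (c0 = 0 \<and> c0' = 0 \<and> c1 * c1' \<noteq> 0) \<or>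
           (c1 = 0 \<and> c1' = 0 \<and> c0 * c0' \<noteq> 0) \<or>
           (c0 * c0' * c1 * c1' \<noteq> 0 \<and> (c0' / c0) ^ 3 = c1' / c1))
         \<and> (\<exists>F. infinite F \<and> (\<forall>\<mu>\<in>F. real_circle_form \<mu>) \<and>
              (\<forall>\<mu>1\<in>F. \<forall>\<mu>2\<in>F. \<mu>1 \<noteq> \<mu>2 \<longrightarrow> \<not> equivalent_rcf \<mu>1 \<mu>2))"
proof
  show "equivalent_rcf (mu_lin c0 c1) (mu_lin c0' c1') \<longleftrightarrow>
           (c0 = 0 \<and> c0' = 0 \<and> c1 = 0 \<and> c1' = 0) \<or>
           (c0 = 0 \<and> c0' = 0 \<and> c1 * c1' \<noteq> 0) \<or>
           (c1 = 0 \<and> c1' = 0 \<and> c0 * c0' \<noteq> 0) \<or>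
           (c0 * c0' * c1 * c1' \<noteq> 0 \<and> (c0' / c0) ^ 3 = c1' / c1)"
    unfolding equiv_iff_kappa by (rule kappa_iff_disj)
  define F where "F = (\<lambda>c. mu_lin 1 c) ` {0::real<..}"
  have val: "fst (snd (snd (mu_lin 1 c (1,1,0,1)))) = 1 - (1 + complex_of_real c)^2" for c
    by (simp add: mu_lin_eval2 Let_def)
  have inj: "inj_on (\<lambda>c. mu_lin 1 c) {0::real<..}"
  proof (rule inj_onI)
    fix a b :: real assume a: "a \<in> {0<..}" and b: "b \<in> {0<..}" and e: "mu_lin 1 a = mu_lin 1 b"
    have "1 - (1 + complex_of_real a)^2 = 1 - (1 + complex_of_real b)^2"
      using val[of a] val[of b] e by simp
    then have "complex_of_real ((1 + a)^2) = complex_of_real ((1 + b)^2)" by simp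
    then have "(1 + a)^2 = (1 + b)^2" by (simp only: of_real_eq_iff)
    then show "a = b" using a b by (simp add: power2_eq_iff)
  qed
  show "\<exists>F. infinite F \<and> (\<forall>\<mu>\<in>F. real_circle_form \<mu>) \<and>
              (\<forall>\<mu>1\<in>F. \<forall>\<mu>2\<in>F. \<mu>1 \<noteq> \<mu>2 \<longrightarrow> \<not> equivalent_rcf \<mu>1 \<mu>2)"
  proof (intro exI[of _ F] conjI ballI impI)
    show "infinite F" unfolding F_def using finite_imageD[OF _ inj] infinite_Ioi[of "0::real"] by blast
    fix \<mu> assume "\<mu> \<in> F" then show "real_circle_form \<mu>" by (auto simp: F_def rcf_mu_lin)
  next
    fix \<mu>1 \<mu>2 assume m1: "\<mu>1 \<in> F" and m2: "\<mu>2 \<in> F" and ne: "\<mu>1 \<noteq> \<mu>2"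
    obtain a where a: "\<mu>1 = mu_lin 1 a" using m1 by (auto simp: F_def)
    obtain b where b: "\<mu>2 = mu_lin 1 b" using m2 by (auto simp: F_def)
    show "\<not> equivalent_rcf \<mu>1 \<mu>2"
    proof
      assume "equivalent_rcf \<mu>1 \<mu>2"
      then obtain \<kappa> :: real where k: "\<kappa> \<noteq> 0" "1 = \<kappa> * 1" "b = \<kappa>^3 * a"
        unfolding a b equiv_iff_kappa by blast
      then have "b = a" by simp
      then show False using ne a b by simp
    qed
  qed
qed


end
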